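(* Let $(a_1,b_1)$ and $(a_2,b_2)$ be pairs of elements of a non-commutative space $(\mathcal{A},\varphi)$ such that the pairs $(\mathrm{alg}(a_1),\mathrm{alg}(b_1))$ and $(\mathrm{alg}(a_2),\mathrm{alg}(b_2))$ are bi-monotonically independent (order $1<2$), and such that for $k=1,2$ and all $m,n\ge0$, $\varphi(a_k^mb_k^n)=\int_{\mathbb{R}^2}x^my^n\,d\mu(x,y)$ with $\mu=\frac12(\delta_{(0,1)}+\delta_{(1,0)})$. Then, with rows and columns indexed by $(0,0),(1,0),(0,1),(1,1)$, the matrix $X_1=\big[\varphi((a_1+a_2)^{i_1+j_1}(b_1+b_2)^{i_2+j_2})\big]_{(i_1,i_2),(j_1,j_2)}$ equals \[X_1=\begin{bmatrix}1&1&1&\tfrac12\\1&\tfrac32&\tfrac12&\tfrac58\\1&\tfrac12&\tfrac32&\tfrac58\\\tfrac12&\tfrac58&\tfrac58&\tfrac34\end{bmatrix},\qquad \det X_1=-\tfrac1{32}.\] Consequently there is no positive Borel measure $\nu$ on $\mathbb{R}^2$ with $\varphi((a_1+a_2)^m(b_1+b_2)^n)=\int x^my^n\,d\nu$ for all $m,n\ge0$; i.e. bi-monotonic convolution does not preserve probability measures on $\mathbb{R}^2$.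
   Context: $\mathrm{alg}(x)$ is the non-unital algebra generated by $x$. A non-commutative space is a complex algebra with a linear functional ($\varphi(1)=1$ if unital). Bi-monotonic product: for pairs $(\mathcal{A}_{k,\ell},\mathcal{A}_{k,r})$ with functionals $\varphi_k$ on $\mathcal{A}_{k,\ell}\sqcup\mathcal{A}_{k,r}$ (free product without identification of units), $k=1,2$, $\varphi_1\rhd\!\!\rhd\varphi_2$ is the restriction to $(\mathcal{A}_{1,\ell}\sqcup\mathcal{A}_{1,r})\sqcup(\mathcal{A}_{2,\ell}\sqcup\mathcal{A}_{2,r})$ of the first functional of the c-bi-free product of $(\widetilde{\varphi_1},\delta_1)$ and $(\widetilde{\varphi_2},\widetilde{\varphi_2})$ on the unitized pairs $(\widetilde{\mathcal{A}_{k,\ell}},\widetilde{\mathcal{A}_{k,r}})$, where $\widetilde{\varphi_k}$ is the unital extension and $\delta_1$ the unital functional vanishing on $\mathcal{A}_{1,\ell}\sqcup\mathcal{A}_{1,r}$. The c-bi-free product of unital functionals $(\varphi_k,\psi_k)$ on $\mathcal{B}_{k,\ell}*\mathcal{B}_{k,r}$ is the unique pair $(\varphi,\psi)$ on $*_k(\mathcal{B}_{k,\ell}*\mathcal{B}_{k,r})$ extending them such that if $b_j\in\mathcal{B}_{\omega(j),\chi(j)}$ with $\psi(b_V)=0$ for all $V\in\pi_{\chi,\omega}$ then $\psi(b_1\cdots b_n)=0$ and $\varphi(b_1\cdots b_n)=\prod_{V\in\pi_{\chi,\omega}}\varphi(b_V)$; here $b_V$ is the product over $V$ in increasing index order, $\prec_\chi$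 is the order $i_1\prec_\chi\cdots\prec_\chi i_n$ with $\chi^{-1}(\ell)=\{i_1<\dots<i_p\}$, $\chi^{-1}(r)=\{i_{p+1}>\dots>i_n\}$, and $\pi_{\chi,\omega}$ is the unique partition into $\prec_\chi$-intervals $V_1,\dots,V_m$ (in $\prec_\chi$-order) on which $\omega$ is constant with $\omega(V_k)\ne\omega(V_{k+1})$. Two pairs of subalgebras are bi-monotonically independent (order $1<2$) if $\varphi$ composed with the canonical homomorphism from the free product equals $\varphi_1\rhd\!\!\rhd\varphi_2$ of the restrictions. *)

theory Defs
  imports "HOL-Probability.Probability" "Jordan_Normal_Form.Determinant"
begin

class cplx_algebra_1 = ring_1 +
  fixes scaleC :: "complex \<Rightarrow> 'a \<Rightarrow> 'a"
  assumes scaleC_add_right: "scaleC c (x + y) = scaleC c x + scaleC c y"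
      and scaleC_add_left: "scaleC (c + d) x = scaleC c x + scaleC d x"
      and scaleC_scaleC: "scaleC c (scaleC d x) = scaleC (c * d) x"
      and scaleC_one: "scaleC 1 x = x"
      and scaleC_mult_left: "scaleC c (x * y) = scaleC c x * y"
      and scaleC_mult_right: "scaleC c (x * y) = x * scaleC c y"

definition nc_space :: "('a::cplx_algebra_1 \<Rightarrow> complex) \<Rightarrow> bool" where
  "nc_space \<phi> \<longleftrightarrow> (\<forall>x y. \<phi> (x + y) = \<phi> x + \<phi> y) \<and>
                    (\<forall>c x. \<phi> (scaleC c x) = c * \<phi> x) \<and> \<phi> 1 = 1"

definition alg :: "'a::cplx_algebra_1 \<Rightarrow> 'a set" where
  "alg x = \<Inter>{B. x \<in> B \<and> (\<forall>u\<in>B. \<forall>v\<in>B. u + v \<in> B \<and> u * v \<in> B)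
                    \<and> (\<forall>c. \<forall>u\<in>B. scaleC c u \<in> B)}"

datatype side = Lft | Rgt

text \<open>A letter ((k, s), c, x) stands for the element c 1 + x of the unitization
  of the algebra A_{k,s} (x in A_{k,s}), placed in the free product.\<close>
type_synonym 'a letter = "(nat \<times> side) \<times> complex \<times> 'a"

definition ltag :: "'a letter \<Rightarrow> nat \<times> side" where "ltag l = fst l"
definition lcoef :: "'a letter \<Rightarrow> complex" where "lcoef l = fst (snd l)"
definition lelt :: "'a letter \<Rightarrow> 'a" where "lelt l = snd (snd l)"

definition lval :: "'a::cplx_algebra_1 letter \<Rightarrow> 'a" where
  "lval l = scaleC (lcoef l) 1 + lelt l"

definition wprod :: "'a::cplx_algebra_1 letter list \<Rightarrow> 'a" where
  "wprod w = prod_list (map lval w)"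

definition adm :: "(nat \<times> side \<Rightarrow> 'a set) \<Rightarrow> 'a letter list \<Rightarrow> bool" where
  "adm S w \<longleftrightarrow> (\<forall>l\<in>set w. fst (ltag l) \<in> {1,2} \<and> lelt l \<in> S (ltag l))"

text \<open>A linear functional on the (unital) free product of the unitizations
  *_k (B_{k,l} * B_{k,r}), given by its values on words: multilinear in
  each letter, invariant under deleting units and merging adjacent letters
  from the same algebra.\<close>
definition word_functional ::
  "(nat \<times> side \<Rightarrow> 'a::cplx_algebra_1 set) \<Rightarrow> ('a letter list \<Rightarrow> complex) \<Rightarrow> bool" where
  "word_functional S F \<longleftrightarrow>
    (\<forall>u v t c x c' x'. adm S (u @ [(t,c,x)] @ v) \<and> adm S (u @ [(t,c',x')] @ v) \<longrightarrow>
        F (u @ [(t, c + c', x + x')] @ v) = F (u @ [(t,c,x)] @ v) + F (u @ [(t,c',x')] @ v)) \<and>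
    (\<forall>u v t c x r. adm S (u @ [(t,c,x)] @ v) \<longrightarrow>
        F (u @ [(t, r * c, scaleC r x)] @ v) = r * F (u @ [(t,c,x)] @ v)) \<and>
    (\<forall>u v t. adm S (u @ v) \<and> fst t \<in> {1,2} \<longrightarrow> F (u @ [(t, 1, 0)] @ v) = F (u @ v)) \<and>
    (\<forall>u v t c x c' x'. adm S (u @ [(t,c,x), (t,c',x')] @ v) \<longrightarrow>
        F (u @ [(t,c,x), (t,c',x')] @ v) =
        F (u @ [(t, c * c', scaleC c x' + scaleC c' x + x * x')] @ v))"

fun runs :: "('b \<Rightarrow> 'c) \<Rightarrow> 'b list \<Rightarrow> 'b list list" where
  "runs f [] = []"
| "runs f (x # xs) = (case runs f xs of
      [] \<Rightarrow> [[x]]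
    | r # rs \<Rightarrow> (if f (hd r) = f x then (x # r) # rs else [x] # r # rs))"

definition chi_order :: "'a letter list \<Rightarrow> nat list" where
  "chi_order w = filter (\<lambda>j. snd (ltag (w ! j)) = Lft) [0..<length w]
               @ rev (filter (\<lambda>j. snd (ltag (w ! j)) = Rgt) [0..<length w])"

definition pi_chi_omega :: "'a letter list \<Rightarrow> nat set list" where
  "pi_chi_omega w = map set (runs (\<lambda>j. fst (ltag (w ! j))) (chi_order w))"

definition subword :: "'a letter list \<Rightarrow> nat set \<Rightarrow> 'a letter list" where
  "subword w V = nths w V"

definition cbifree_property ::
  "(nat \<times> side \<Rightarrow> 'a set) \<Rightarrow> ('a letter list \<Rightarrow> complex) \<Rightarrow> ('a letter list \<Rightarrow> complex) \<Rightarrow> bool" where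
  "cbifree_property S \<Phi> \<Psi> \<longleftrightarrow>
    (\<forall>w. adm S w \<and> w \<noteq> [] \<and> (\<forall>V\<in>set (pi_chi_omega w). \<Psi> (subword w V) = 0) \<longrightarrow>
        \<Psi> w = 0 \<and> \<Phi> w = prod_list (map (\<lambda>V. \<Phi> (subword w V)) (pi_chi_omega w)))"

text \<open>Pairs (S(1,Lft),S(1,Rgt)) and (S(2,Lft),S(2,Rgt)) of subalgebras of the
  non-commutative space (A,\<phi>) are bi-monotonically independent (order 1 < 2):
  \<phi> composed with the canonical homomorphism from the free product (without
  identification of units) agrees with \<phi>_1 \<rhd>\<rhd> \<phi>_2, the restriction to non-unital
  words of the first functional \<Phi> of the c-bi-free product of
  (\<phi>_1~, \<delta>_1) and (\<phi>_2~, \<phi>_2~).  Here \<phi>_k~ on words from pair k is \<phi> of the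
  product (the unital extension of the restriction \<phi>_k), and \<delta>_1 is the
  product of the unit coefficients.\<close>
definition bimonotone_indep ::
  "('a::cplx_algebra_1 \<Rightarrow> complex) \<Rightarrow> (nat \<times> side \<Rightarrow> 'a set) \<Rightarrow> bool" where
  "bimonotone_indep \<phi> S \<longleftrightarrow>
    (\<exists>\<Phi> \<Psi>. word_functional S \<Phi> \<and> word_functional S \<Psi> \<and>
       (\<forall>k\<in>{1,2}. \<forall>w. adm S w \<and> (\<forall>l\<in>set w. fst (ltag l) = k) \<longrightarrow> \<Phi> w = \<phi> (wprod w)) \<and>
       (\<forall>w. adm S w \<and> (\<forall>l\<in>set w. fst (ltag l) = 1) \<longrightarrow> \<Psi> w = prod_list (map lcoef w)) \<and>
       (\<forall>w. adm S w \<and> (\<forall>l\<in>set w. fst (ltag l) = 2) \<longrightarrow> \<Psi> w = \<phi> (wprod w)) \<and>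
       cbifree_property S \<Phi> \<Psi> \<and>
       (\<forall>w. adm S w \<and> w \<noteq> [] \<and> (\<forall>l\<in>set w. lcoef l = 0) \<longrightarrow> \<phi> (wprod w) = \<Phi> w))"

definition pair_algs :: "'a::cplx_algebra_1 \<Rightarrow> 'a \<Rightarrow> 'a \<Rightarrow> 'a \<Rightarrow> nat \<times> side \<Rightarrow> 'a set" where
  "pair_algs a1 b1 a2 b2 t =
     (case t of (k, Lft) \<Rightarrow> (if k = 1 then alg a1 else alg a2)
              | (k, Rgt) \<Rightarrow> (if k = 1 then alg b1 else alg b2))"

definition mu :: "(real \<times> real) measure" where
  "mu = measure_pmf (pmf_of_set {(0, 1), (1, 0)})"

definition idx :: "(nat \<times> nat) list" where
  "idx = [(0,0), (1,0), (0,1), (1,1)]"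

end

theory Submission
  imports Defs
begin

lemma scaleC_zero_left[simp]: "scaleC 0 (x::'a::cplx_algebra_1) = 0"
proof -
  have "scaleC (0+0) x = scaleC 0 x + scaleC 0 x" by (rule scaleC_add_left)
  then show ?thesis by simp
qed

lemma scaleC_zero_right[simp]: "scaleC c (0::'a::cplx_algebra_1) = 0"
proof -
  have "scaleC c (0+0) = scaleC c 0 + scaleC c (0::'a)" by (rule scaleC_add_right)
  then show ?thesis by simp
qed

lemma mu_int: fixes f :: "real \<times> real \<Rightarrow> real" shows "(\<integral>p. f p \<partial>mu) = (f (0,1) + f (1,0)) / 2"
  unfolding mu_def by (subst integral_pmf_of_set) auto

lemma alg_base[simp]: "x \<in> alg x" unfolding alg_def by auto
lemma alg_mult[simp]: "u \<in> alg x \<Longrightarrow> v \<in> alg x \<Longrightarrow> u * v \<in> alg x"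
  unfolding alg_def by auto

lemma alg_zero[simp]: "0 \<in> alg x"
  unfolding alg_def
proof (rule InterI)
  fix B assume "B \<in> {B. x \<in> B \<and> (\<forall>u\<in>B. \<forall>v\<in>B. u + v \<in> B \<and> u * v \<in> B) \<and> (\<forall>c. \<forall>u\<in>B. scaleC c u \<in> B)}"
  then have "scaleC 0 x \<in> B" by blast
  then show "0 \<in> B" by simp
qed

lemma pair_algs_zero[simp]: "0 \<in> pair_algs a1 b1 a2 b2 t"
  by (cases t; cases "snd t") (auto simp: pair_algs_def)

lemma wf_add: assumes "word_functional S F" "adm S (u @ [(t,c,x)] @ v)" "adm S (u @ [(t,c',x')] @ v)"
  shows "F (u @ [(t, c + c', x + x')] @ v) = F (u @ [(t,c,x)] @ v) + F (u @ [(t,c',x')] @ v)"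
proof -
  have H: "\<forall>u v t c x c' x'. adm S (u @ [(t,c,x)] @ v) \<and> adm S (u @ [(t,c',x')] @ v) \<longrightarrow>
        F (u @ [(t, c + c', x + x')] @ v) = F (u @ [(t,c,x)] @ v) + F (u @ [(t,c',x')] @ v)"
    using assms(1) unfolding word_functional_def by (rule conjunct1)
  show ?thesis using H[rule_format, of u t c x v c' x'] assms(2,3) by simp
qed
lemma wf_scale: assumes "word_functional S F" "adm S (u @ [(t,c,x)] @ v)"
  shows "F (u @ [(t, r * c, scaleC r x)] @ v) = r * F (u @ [(t,c,x)] @ v)"
proof -
  have H: "\<forall>u v t c x r. adm S (u @ [(t,c,x)] @ v) \<longrightarrow>
        F (u @ [(t, r * c, scaleC r x)] @ v) = r * F (u @ [(t,c,x)] @ v)"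
    using assms(1) unfolding word_functional_def by (elim conjE)
  show ?thesis using H[rule_format, of u t c x v r] assms(2) by simp
qed
lemma wf_unit: assumes "word_functional S F" "adm S (u @ v)" "fst t \<in> {1,2}"
  shows "F (u @ [(t, 1, 0)] @ v) = F (u @ v)"
proof -
  have H: "\<forall>u v t. adm S (u @ v) \<and> fst t \<in> {1,2} \<longrightarrow> F (u @ [(t, 1, 0)] @ v) = F (u @ v)"
    using assms(1) unfolding word_functional_def by (elim conjE)
  show ?thesis using H[rule_format, of u v t] assms(2,3) by simp
qed

lemma mrl_dims[simp]: "dim_row (mat_of_rows_list n rs) = length rs" "dim_col (mat_of_rows_list n rs) = n"
  unfolding mat_of_rows_list_def by simp_all

lemma mrl_index: "i < length rs \<Longrightarrow> j < n \<Longrightarrow> mat_of_rows_list n rs $$ (i,j) = rs ! i ! j"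
  unfolding mat_of_rows_list_def by simp

lemma mrl_carrier: "length rs = n \<Longrightarrow> mat_of_rows_list m rs \<in> carrier_mat n m"
  unfolding carrier_mat_def by simp

lemma ent4: assumes "A \<in> carrier_mat 4 4" "B \<in> carrier_mat 4 4" "i < 4" "j < 4"
  shows "(A*B)$$(i,j) = A$$(i,0)*B$$(0,j) + A$$(i,1)*B$$(1,j) + A$$(i,2)*B$$(2,j) + A$$(i,3)*B$$(3,j)"
proof -
  have "(A*B)$$(i,j) = (\<Sum>k\<in>{0..<4}. A$$(i,k) * B$$(k,j))"
    using assms by (simp add: scalar_prod_def)
  also have "{0..<4::nat} = {0,1,2,3}" by auto
  finally show ?thesis by (simp add: algebra_simps)
qed

lemma four: "i < (4::nat) \<Longrightarrow> i = 0 \<or> i = 1 \<or> i = 2 \<or> i = 3" by auto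

lemma det4: "det (mat_of_rows_list 4
              [[1, 1, 1, 1/2],
               [1, 3/2, 1/2, 5/8],
               [1, 1/2, 3/2, 5/8],
               [1/2, 5/8, 5/8, 3/4]] :: complex mat) = - 1/32"
proof -
  define U :: "complex mat" where "U = mat_of_rows_list 4 [[1, 14/23, 28/47, 2/3], [0, 1, -1/47, 5/6], [0, 0, 1, 5/6], [0, 0, 0, 1]]"
  define L :: "complex mat" where "L = mat_of_rows_list 4 [[-1/23, 0, 0, 0], [28/47, 46/47, 0, 0], [7/12, -1/48, 47/48, 0], [1/2, 5/8, 5/8, 3/4]]"
  have Uc: "U \<in> carrier_mat 4 4" unfolding U_def by (rule mrl_carrier) simp
  have Lc: "L \<in> carrier_mat 4 4" unfolding L_def by (rule mrl_carrier) simp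
  have prod: "mat_of_rows_list 4
              [[1, 1, 1, 1/2],
               [1, 3/2, 1/2, 5/8],
               [1, 1/2, 3/2, 5/8],
               [1/2, 5/8, 5/8, 3/4]] = U * L"
  proof (rule eq_matI)
    fix i j assume "i < dim_row (U * L)" "j < dim_col (U * L)"
    then have ij: "i < 4" "j < 4" using Uc Lc by auto
    show "mat_of_rows_list 4 [[1, 1, 1, 1/2], [1, 3/2, 1/2, 5/8], [1, 1/2, 3/2, 5/8], [1/2, 5/8, 5/8, 3/4]] $$ (i, j) = (U * L) $$ (i, j)"
      unfolding ent4[OF Uc Lc ij] using four[OF ij(1)] four[OF ij(2)]
      by (elim disjE; simp add: U_def L_def mrl_index)
  qed (use Uc Lc in auto)
  have dU: "det U = 1"
  proof -
    have ut: "upper_triangular U"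
      unfolding upper_triangular_def
    proof (intro allI impI)
      fix i j assume "i < dim_row U" "j < i"
      then have a: "i < 4" "j < 4" "j < i" using Uc by auto
      then show "U $$ (i,j) = 0" using four[OF a(1)] four[OF a(2)]
        by (elim disjE; simp add: U_def mrl_index)
    qed
    have "det U = prod_list (diag_mat U)" by (rule det_upper_triangular[OF ut Uc])
    also have "\<dots> = 1" using Uc by (simp add: diag_mat_def upt_rec U_def mrl_index)
    finally show ?thesis .
  qed
  have dL: "det L = -1/32"
  proof -
    have "det L = prod_list (diag_mat L)"
    proof (rule det_lower_triangular[OF _ Lc])
      fix i j :: nat assume a0: "i < j" "j < 4"
      then have a: "i < 4" "j < 4" "i < j" by auto
      then show "L $$ (i,j) = 0" using four[OF a(1)] four[OF a(2)]
        by (elim disjE; simp add: L_def mrl_index)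
    qed
    also have "\<dots> = -1/32" using Lc by (simp add: diag_mat_def upt_rec L_def mrl_index)
    finally show ?thesis .
  qed
  show ?thesis unfolding prod det_mult[OF Uc Lc] dU dL by simp
qed
lemma no_meas_gen:
  fixes \<nu> :: "(real \<times> real) measure"
  assumes int: "\<And>m n. integrable \<nu> (\<lambda>p. fst p ^ m * snd p ^ n)"
  and v00: "(\<integral>p. fst p ^ 0 * snd p ^ 0 \<partial>\<nu>) = 1"
  and v10: "(\<integral>p. fst p ^ 1 * snd p ^ 0 \<partial>\<nu>) = 1"
  and v01: "(\<integral>p. fst p ^ 0 * snd p ^ 1 \<partial>\<nu>) = 1"
  and v20: "(\<integral>p. fst p ^ 2 * snd p ^ 0 \<partial>\<nu>) = 3/2"
  and v02: "(\<integral>p. fst p ^ 0 * snd p ^ 2 \<partial>\<nu>) = 3/2"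
  and v11: "(\<integral>p. fst p ^ 1 * snd p ^ 1 \<partial>\<nu>) = 1/2"
  and v21: "(\<integral>p. fst p ^ 2 * snd p ^ 1 \<partial>\<nu>) = 5/8"
  and v12: "(\<integral>p. fst p ^ 1 * snd p ^ 2 \<partial>\<nu>) = 5/8"
  and v22: "(\<integral>p. fst p ^ 2 * snd p ^ 2 \<partial>\<nu>) = 3/4"
  shows False
proof -
  define g where "g m n = (\<lambda>p::real\<times>real. fst p ^ m * snd p ^ n)" for m n
  have ig: "integrable \<nu> (g m n)" for m n unfolding g_def by (rule int)
  have eq: "(\<lambda>p. (4 - 2 * fst p - 2 * snd p + fst p * snd p)^2) =
     (\<lambda>p. 16 * g 0 0 p - 16 * g 1 0 p - 16 * g 0 1 p + 4 * g 2 0 p + 4 * g 0 2 p + 16 * g 1 1 p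
        - 4 * g 2 1 p - 4 * g 1 2 p + g 2 2 p)"
    by (rule ext) (simp add: g_def power2_eq_square algebra_simps)
  have "0 \<le> (\<integral>p. (4 - 2 * fst p - 2 * snd p + fst p * snd p)^2 \<partial>\<nu>)"
    by (rule Bochner_Integration.integral_nonneg) simp
  also have "\<dots> = 16 * integral\<^sup>L \<nu> (g 0 0) - 16 * integral\<^sup>L \<nu> (g 1 0) - 16 * integral\<^sup>L \<nu> (g 0 1)
     + 4 * integral\<^sup>L \<nu> (g 2 0) + 4 * integral\<^sup>L \<nu> (g 0 2) + 16 * integral\<^sup>L \<nu> (g 1 1)
     - 4 * integral\<^sup>L \<nu> (g 2 1) - 4 * integral\<^sup>L \<nu> (g 1 2) + integral\<^sup>L \<nu> (g 2 2)"
    unfolding eq using ig by (simp add: integral_add integral_diff)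
  also have "\<dots> = - 1/4"
    using v00 v10 v01 v20 v02 v11 v21 v12 v22 unfolding g_def by simp
  finally show False by simp
qed

locale bm =
  fixes \<phi> :: "'a::cplx_algebra_1 \<Rightarrow> complex" and a1 b1 a2 b2 :: 'a
    and \<Phi> \<Psi> :: "'a letter list \<Rightarrow> complex"
  assumes nc: "nc_space \<phi>"
  and wfP: "word_functional (pair_algs a1 b1 a2 b2) \<Phi>"
  and Pk: "\<forall>k\<in>{1,2}. \<forall>w. adm (pair_algs a1 b1 a2 b2) w \<and> (\<forall>l\<in>set w. fst (ltag l) = k) \<longrightarrow> \<Phi> w = \<phi> (wprod w)"
  and Q1: "\<forall>w. adm (pair_algs a1 b1 a2 b2) w \<and> (\<forall>l\<in>set w. fst (ltag l) = 1) \<longrightarrow> \<Psi> w = prod_list (map lcoef w)"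
  and Q2: "\<forall>w. adm (pair_algs a1 b1 a2 b2) w \<and> (\<forall>l\<in>set w. fst (ltag l) = 2) \<longrightarrow> \<Psi> w = \<phi> (wprod w)"
  and cb: "cbifree_property (pair_algs a1 b1 a2 b2) \<Phi> \<Psi>"
  and link: "\<forall>w. adm (pair_algs a1 b1 a2 b2) w \<and> w \<noteq> [] \<and> (\<forall>l\<in>set w. lcoef l = 0) \<longrightarrow> \<phi> (wprod w) = \<Phi> w"
  and m1: "\<forall>m n::nat. \<phi> (a1 ^ m * b1 ^ n) = complex_of_real (\<integral>p. (fst p) ^ m * (snd p) ^ n \<partial>mu)"
  and m2: "\<forall>m n::nat. \<phi> (a2 ^ m * b2 ^ n) = complex_of_real (\<integral>p. (fst p) ^ m * (snd p) ^ n \<partial>mu)"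
begin

abbreviation "S \<equiv> pair_algs a1 b1 a2 b2"

lemma phi_add[simp]: "\<phi> (x + y) = \<phi> x + \<phi> y" using nc unfolding nc_space_def by blast
lemma phi_scale[simp]: "\<phi> (scaleC c x) = c * \<phi> x" using nc unfolding nc_space_def by blast
lemma phi_one[simp]: "\<phi> 1 = 1" using nc unfolding nc_space_def by blast

lemma mom1: "\<phi> (a1 ^ m * b1 ^ n) = ((0::complex)^m + 0^n) / 2"
  using m1 by (simp add: mu_int)
lemma mom2: "\<phi> (a2 ^ m * b2 ^ n) = ((0::complex)^m + 0^n) / 2"
  using m2 by (simp add: mu_int)

lemma adm_simp: "adm S w \<longleftrightarrow> (\<forall>l\<in>set w. fst (ltag l) \<in> {1,2} \<and> lelt l \<in> S (ltag l))"
  by (simp add: adm_def)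

lemma adm_sub: "adm S w \<Longrightarrow> set w' \<subseteq> set w \<Longrightarrow> adm S w'"
  unfolding adm_def by auto

lemma cen:
  assumes "fst t = 2" "adm S (u @ [(t,0,x)] @ v)"
  shows "\<Phi> (u @ [(t,0,x)] @ v) = \<Phi> (u @ [(t, - \<phi> x, x)] @ v) + \<phi> x * \<Phi> (u @ v)"
proof -
  have ad1: "adm S (u @ [(t,c,x)] @ v)" for c
    using assms unfolding adm_def by (auto simp: ltag_def lelt_def)
  have ad0: "adm S (u @ [(t,c,0)] @ v)" for c
    using assms unfolding adm_def by (auto simp: ltag_def lelt_def)
  have uv: "adm S (u @ v)" using assms(2) unfolding adm_def by auto
  have add: "\<Phi> (u @ [(t, - \<phi> x + \<phi> x, x + 0)] @ v) = \<Phi> (u @ [(t, - \<phi> x, x)] @ v) + \<Phi> (u @ [(t,\<phi> x,0)] @ v)"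
    by (rule wf_add[OF wfP ad1 ad0])
  have sc: "\<Phi> (u @ [(t, \<phi> x * 1, scaleC (\<phi> x) 0)] @ v) = \<phi> x * \<Phi> (u @ [(t,1,0)] @ v)"
    by (rule wf_scale[OF wfP ad0])
  have un: "\<Phi> (u @ [(t, 1, 0)] @ v) = \<Phi> (u @ v)"
    by (rule wf_unit[OF wfP uv]) (simp add: assms(1))
  show ?thesis using add sc un by simp
qed

lemma P2': "adm S w \<Longrightarrow> \<forall>l\<in>set w. fst (ltag l) = 2 \<Longrightarrow> \<Phi> w = \<phi> (wprod w)"
proof -
  assume a: "adm S w" "\<forall>l\<in>set w. fst (ltag l) = 2"
  have "(2::nat) \<in> {1,2}" by simp
  with Pk have "\<forall>w. adm S w \<and> (\<forall>l\<in>set w. fst (ltag l) = 2) \<longrightarrow> \<Phi> w = \<phi> (wprod w)" by (rule bspec)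
  with a show ?thesis by blast
qed

lemma zl:
  assumes "adm S w" "w \<noteq> []" "\<forall>V\<in>set (pi_chi_omega w). \<Psi> (subword w V) = 0"
    "\<exists>V\<in>set (pi_chi_omega w). \<forall>l\<in>set (subword w V). fst (ltag l) = 2"
  shows "\<Phi> w = 0"
proof -
  have e: "\<Phi> w = prod_list (map (\<lambda>V. \<Phi> (subword w V)) (pi_chi_omega w))"
    using cb assms(1-3) unfolding cbifree_property_def by (elim allE impE) auto
  from assms(4) obtain V where V: "V \<in> set (pi_chi_omega w)" "\<forall>l\<in>set (subword w V). fst (ltag l) = 2" by blast
  have ad: "adm S (subword w V)" using adm_sub[OF assms(1)] set_nths_subset unfolding subword_def by metis
  have "\<Phi> (subword w V) = \<phi> (wprod (subword w V))" by (rule P2'[OF ad V(2)])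
  also have "\<dots> = \<Psi> (subword w V)" using Q2 ad V(2) by simp
  also have "\<dots> = 0" using assms(3) V(1) by simp
  finally have z: "\<Phi> (subword w V) = 0" .
  have "0 \<in> set (map (\<lambda>V. \<Phi> (subword w V)) (pi_chi_omega w))"
    unfolding set_map using V(1) z by (metis image_eqI)
  then show ?thesis using e by (simp add: prod_list_zero_iff)
qed

lemma Q1': "adm S w \<Longrightarrow> \<forall>l\<in>set w. fst (ltag l) = 1 \<Longrightarrow> \<Psi> w = prod_list (map lcoef w)"
  using Q1 by blast
lemma Q2': "adm S w \<Longrightarrow> \<forall>l\<in>set w. fst (ltag l) = 2 \<Longrightarrow> \<Psi> w = \<phi> (wprod w)"
  using Q2 by blast
lemma P1': "adm S w \<Longrightarrow> \<forall>l\<in>set w. fst (ltag l) = 1 \<Longrightarrow> \<Phi> w = \<phi> (wprod w)"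
  using Pk by blast
lemma link': "adm S w \<Longrightarrow> w \<noteq> [] \<Longrightarrow> \<forall>l\<in>set w. lcoef l = 0 \<Longrightarrow> \<phi> (wprod w) = \<Phi> w"
  using link by blast

lemmas wsimps = adm_simp pair_algs_def ltag_def lelt_def lcoef_def wprod_def lval_def
   pi_chi_omega_def chi_order_def subword_def

lemma mf1_0_1: "\<phi> (b1) = 1 / 2"
  using mom1[of 0 1] by (simp add: power2_eq_square mult.assoc)

lemma mf1_0_2: "\<phi> (b1 * b1) = 1 / 2"
  using mom1[of 0 2] by (simp add: power2_eq_square mult.assoc)

lemma mf1_1_0: "\<phi> (a1) = 1 / 2"
  using mom1[of 1 0] by (simp add: power2_eq_square mult.assoc)

lemma mf1_1_1: "\<phi> (a1 * b1) = 0"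
  using mom1[of 1 1] by (simp add: power2_eq_square mult.assoc)

lemma mf1_1_2: "\<phi> (a1 * (b1 * b1)) = 0"
  using mom1[of 1 2] by (simp add: power2_eq_square mult.assoc)

lemma mf1_2_0: "\<phi> (a1 * a1) = 1 / 2"
  using mom1[of 2 0] by (simp add: power2_eq_square mult.assoc)

lemma mf1_2_1: "\<phi> (a1 * (a1 * b1)) = 0"
  using mom1[of 2 1] by (simp add: power2_eq_square mult.assoc)

lemma mf1_2_2: "\<phi> (a1 * (a1 * (b1 * b1))) = 0"
  using mom1[of 2 2] by (simp add: power2_eq_square mult.assoc)

lemma mf2_0_1: "\<phi> (b2) = 1 / 2"
  using mom2[of 0 1] by (simp add: power2_eq_square mult.assoc)

lemma mf2_0_2: "\<phi> (b2 * b2) = 1 / 2"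
  using mom2[of 0 2] by (simp add: power2_eq_square mult.assoc)

lemma mf2_1_0: "\<phi> (a2) = 1 / 2"
  using mom2[of 1 0] by (simp add: power2_eq_square mult.assoc)

lemma mf2_1_1: "\<phi> (a2 * b2) = 0"
  using mom2[of 1 1] by (simp add: power2_eq_square mult.assoc)

lemma mf2_1_2: "\<phi> (a2 * (b2 * b2)) = 0"
  using mom2[of 1 2] by (simp add: power2_eq_square mult.assoc)

lemma mf2_2_0: "\<phi> (a2 * a2) = 1 / 2"
  using mom2[of 2 0] by (simp add: power2_eq_square mult.assoc)

lemma mf2_2_1: "\<phi> (a2 * (a2 * b2)) = 0"
  using mom2[of 2 1] by (simp add: power2_eq_square mult.assoc)

lemma mf2_2_2: "\<phi> (a2 * (a2 * (b2 * b2))) = 0"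
  using mom2[of 2 2] by (simp add: power2_eq_square mult.assoc)

lemmas momfacts = mf1_0_1 mf1_0_2 mf1_1_0 mf1_1_1 mf1_1_2 mf1_2_0 mf1_2_1 mf1_2_2 mf2_0_1 mf2_0_2 mf2_1_0 mf2_1_1 mf2_1_2 mf2_2_0 mf2_2_1 mf2_2_2

lemma W_1R1_2R1c: "\<Phi> [((1,Rgt), 0, b1), ((2,Rgt), - \<phi> b2, b2)] = 0"
  by (rule zl) (simp_all add: wsimps Q1' Q2' numeral_eq_Suc upt_rec nths_Cons mult.assoc momfacts)

lemma W_1R1: "\<Phi> [((1,Rgt), 0, b1)] = 1 / 2"
proof -
  have "\<Phi> [((1,Rgt), 0, b1)] = \<phi> (wprod [((1,Rgt), 0, b1)])" by (rule P1') (simp_all add: wsimps)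
  also have "\<dots> = 1 / 2" by (simp add: wsimps mult.assoc momfacts)
  finally show ?thesis .
qed

lemma W_1R1_2R1: "\<Phi> [((1,Rgt), 0, b1), ((2,Rgt), 0, b2)] = 1 / 4"
proof -
  have e: "\<Phi> [((1,Rgt), 0, b1), ((2,Rgt), 0, b2)] = \<Phi> [((1,Rgt), 0, b1), ((2,Rgt), - \<phi> b2, b2)] + \<phi> b2 * \<Phi> [((1,Rgt), 0, b1)]"
    using cen[of "(2,Rgt)" "[((1,Rgt), 0, b1)]" "b2" "[]"] by (simp add: wsimps)
  show ?thesis unfolding e W_1R1_2R1c W_1R1 by (simp add: momfacts)
qed

lemma W_2R1c_1R1: "\<Phi> [((2,Rgt), - \<phi> b2, b2), ((1,Rgt), 0, b1)] = 0"
  by (rule zl) (simp_all add: wsimps Q1' Q2' numeral_eq_Suc upt_rec nths_Cons mult.assoc momfacts)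

lemma W_2R1_1R1: "\<Phi> [((2,Rgt), 0, b2), ((1,Rgt), 0, b1)] = 1 / 4"
proof -
  have e: "\<Phi> [((2,Rgt), 0, b2), ((1,Rgt), 0, b1)] = \<Phi> [((2,Rgt), - \<phi> b2, b2), ((1,Rgt), 0, b1)] + \<phi> b2 * \<Phi> [((1,Rgt), 0, b1)]"
    using cen[of "(2,Rgt)" "[]" "b2" "[((1,Rgt), 0, b1)]"] by (simp add: wsimps)
  show ?thesis unfolding e W_2R1c_1R1 W_1R1 by (simp add: momfacts)
qed

lemma W_1L1_2R1c: "\<Phi> [((1,Lft), 0, a1), ((2,Rgt), - \<phi> b2, b2)] = 0"
  by (rule zl) (simp_all add: wsimps Q1' Q2' numeral_eq_Suc upt_rec nths_Cons mult.assoc momfacts)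

lemma W_1L1: "\<Phi> [((1,Lft), 0, a1)] = 1 / 2"
proof -
  have "\<Phi> [((1,Lft), 0, a1)] = \<phi> (wprod [((1,Lft), 0, a1)])" by (rule P1') (simp_all add: wsimps)
  also have "\<dots> = 1 / 2" by (simp add: wsimps mult.assoc momfacts)
  finally show ?thesis .
qed

lemma W_1L1_2R1: "\<Phi> [((1,Lft), 0, a1), ((2,Rgt), 0, b2)] = 1 / 4"
proof -
  have e: "\<Phi> [((1,Lft), 0, a1), ((2,Rgt), 0, b2)] = \<Phi> [((1,Lft), 0, a1), ((2,Rgt), - \<phi> b2, b2)] + \<phi> b2 * \<Phi> [((1,Lft), 0, a1)]"
    using cen[of "(2,Rgt)" "[((1,Lft), 0, a1)]" "b2" "[]"] by (simp add: wsimps)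
  show ?thesis unfolding e W_1L1_2R1c W_1L1 by (simp add: momfacts)
qed

lemma W_2L1c_1R1: "\<Phi> [((2,Lft), - \<phi> a2, a2), ((1,Rgt), 0, b1)] = 0"
  by (rule zl) (simp_all add: wsimps Q1' Q2' numeral_eq_Suc upt_rec nths_Cons mult.assoc momfacts)

lemma W_2L1_1R1: "\<Phi> [((2,Lft), 0, a2), ((1,Rgt), 0, b1)] = 1 / 4"
proof -
  have e: "\<Phi> [((2,Lft), 0, a2), ((1,Rgt), 0, b1)] = \<Phi> [((2,Lft), - \<phi> a2, a2), ((1,Rgt), 0, b1)] + \<phi> a2 * \<Phi> [((1,Rgt), 0, b1)]"
    using cen[of "(2,Lft)" "[]" "a2" "[((1,Rgt), 0, b1)]"] by (simp add: wsimps)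
  show ?thesis unfolding e W_2L1c_1R1 W_1R1 by (simp add: momfacts)
qed

lemma W_1L1_1R1_2R1c: "\<Phi> [((1,Lft), 0, a1), ((1,Rgt), 0, b1), ((2,Rgt), - \<phi> b2, b2)] = 0"
  by (rule zl) (simp_all add: wsimps Q1' Q2' numeral_eq_Suc upt_rec nths_Cons mult.assoc momfacts)

lemma W_1L1_1R1: "\<Phi> [((1,Lft), 0, a1), ((1,Rgt), 0, b1)] = 0"
proof -
  have "\<Phi> [((1,Lft), 0, a1), ((1,Rgt), 0, b1)] = \<phi> (wprod [((1,Lft), 0, a1), ((1,Rgt), 0, b1)])" by (rule P1') (simp_all add: wsimps)
  also have "\<dots> = 0" by (simp add: wsimps mult.assoc momfacts)
  finally show ?thesis .
qed

lemma W_1L1_1R1_2R1: "\<Phi> [((1,Lft), 0, a1), ((1,Rgt), 0, b1), ((2,Rgt), 0, b2)] = 0"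
proof -
  have e: "\<Phi> [((1,Lft), 0, a1), ((1,Rgt), 0, b1), ((2,Rgt), 0, b2)] = \<Phi> [((1,Lft), 0, a1), ((1,Rgt), 0, b1), ((2,Rgt), - \<phi> b2, b2)] + \<phi> b2 * \<Phi> [((1,Lft), 0, a1), ((1,Rgt), 0, b1)]"
    using cen[of "(2,Rgt)" "[((1,Lft), 0, a1), ((1,Rgt), 0, b1)]" "b2" "[]"] by (simp add: wsimps)
  show ?thesis unfolding e W_1L1_1R1_2R1c W_1L1_1R1 by (simp add: momfacts)
qed

lemma W_1L1_2R1c_1R1: "\<Phi> [((1,Lft), 0, a1), ((2,Rgt), - \<phi> b2, b2), ((1,Rgt), 0, b1)] = 0"
  by (rule zl) (simp_all add: wsimps Q1' Q2' numeral_eq_Suc upt_rec nths_Cons mult.assoc momfacts)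

lemma W_1L1_2R1_1R1: "\<Phi> [((1,Lft), 0, a1), ((2,Rgt), 0, b2), ((1,Rgt), 0, b1)] = 0"
proof -
  have e: "\<Phi> [((1,Lft), 0, a1), ((2,Rgt), 0, b2), ((1,Rgt), 0, b1)] = \<Phi> [((1,Lft), 0, a1), ((2,Rgt), - \<phi> b2, b2), ((1,Rgt), 0, b1)] + \<phi> b2 * \<Phi> [((1,Lft), 0, a1), ((1,Rgt), 0, b1)]"
    using cen[of "(2,Rgt)" "[((1,Lft), 0, a1)]" "b2" "[((1,Rgt), 0, b1)]"] by (simp add: wsimps)
  show ?thesis unfolding e W_1L1_2R1c_1R1 W_1L1_1R1 by (simp add: momfacts)
qed

lemma W_1L1_2R2c: "\<Phi> [((1,Lft), 0, a1), ((2,Rgt), - \<phi> (b2 * b2), (b2 * b2))] = 0"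
  by (rule zl) (simp_all add: wsimps Q1' Q2' numeral_eq_Suc upt_rec nths_Cons mult.assoc momfacts)

lemma W_1L1_2R2: "\<Phi> [((1,Lft), 0, a1), ((2,Rgt), 0, (b2 * b2))] = 1 / 4"
proof -
  have e: "\<Phi> [((1,Lft), 0, a1), ((2,Rgt), 0, (b2 * b2))] = \<Phi> [((1,Lft), 0, a1), ((2,Rgt), - \<phi> (b2 * b2), (b2 * b2))] + \<phi> (b2 * b2) * \<Phi> [((1,Lft), 0, a1)]"
    using cen[of "(2,Rgt)" "[((1,Lft), 0, a1)]" "(b2 * b2)" "[]"] by (simp add: wsimps)
  show ?thesis unfolding e W_1L1_2R2c W_1L1 by (simp add: momfacts)
qed

lemma W_2L1c_1R2: "\<Phi> [((2,Lft), - \<phi> a2, a2), ((1,Rgt), 0, (b1 * b1))] = 0"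
  by (rule zl) (simp_all add: wsimps Q1' Q2' numeral_eq_Suc upt_rec nths_Cons mult.assoc momfacts)

lemma W_1R2: "\<Phi> [((1,Rgt), 0, (b1 * b1))] = 1 / 2"
proof -
  have "\<Phi> [((1,Rgt), 0, (b1 * b1))] = \<phi> (wprod [((1,Rgt), 0, (b1 * b1))])" by (rule P1') (simp_all add: wsimps)
  also have "\<dots> = 1 / 2" by (simp add: wsimps mult.assoc momfacts)
  finally show ?thesis .
qed

lemma W_2L1_1R2: "\<Phi> [((2,Lft), 0, a2), ((1,Rgt), 0, (b1 * b1))] = 1 / 4"
proof -
  have e: "\<Phi> [((2,Lft), 0, a2), ((1,Rgt), 0, (b1 * b1))] = \<Phi> [((2,Lft), - \<phi> a2, a2), ((1,Rgt), 0, (b1 * b1))] + \<phi> a2 * \<Phi> [((1,Rgt), 0, (b1 * b1))]"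
    using cen[of "(2,Lft)" "[]" "a2" "[((1,Rgt), 0, (b1 * b1))]"] by (simp add: wsimps)
  show ?thesis unfolding e W_2L1c_1R2 W_1R2 by (simp add: momfacts)
qed

lemma W_2L1_1R1_2R1: "\<Phi> [((2,Lft), 0, a2), ((1,Rgt), 0, b1), ((2,Rgt), 0, b2)] = 0"
  by (rule zl) (simp_all add: wsimps Q1' Q2' numeral_eq_Suc upt_rec nths_Cons mult.assoc momfacts)

lemma W_2L1c_2R1c_1R1: "\<Phi> [((2,Lft), - \<phi> a2, a2), ((2,Rgt), - \<phi> b2, b2), ((1,Rgt), 0, b1)] = 0"
  by (rule zl) (simp_all add: wsimps Q1' Q2' numeral_eq_Suc upt_rec nths_Cons mult.assoc momfacts)

lemma W_2L1c_2R1_1R1: "\<Phi> [((2,Lft), - \<phi> a2, a2), ((2,Rgt), 0, b2), ((1,Rgt), 0, b1)] = 0"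
proof -
  have e: "\<Phi> [((2,Lft), - \<phi> a2, a2), ((2,Rgt), 0, b2), ((1,Rgt), 0, b1)] = \<Phi> [((2,Lft), - \<phi> a2, a2), ((2,Rgt), - \<phi> b2, b2), ((1,Rgt), 0, b1)] + \<phi> b2 * \<Phi> [((2,Lft), - \<phi> a2, a2), ((1,Rgt), 0, b1)]"
    using cen[of "(2,Rgt)" "[((2,Lft), - \<phi> a2, a2)]" "b2" "[((1,Rgt), 0, b1)]"] by (simp add: wsimps)
  show ?thesis unfolding e W_2L1c_2R1c_1R1 W_2L1c_1R1 by (simp add: momfacts)
qed

lemma W_2L1_2R1_1R1: "\<Phi> [((2,Lft), 0, a2), ((2,Rgt), 0, b2), ((1,Rgt), 0, b1)] = 1 / 8"
proof -
  have e: "\<Phi> [((2,Lft), 0, a2), ((2,Rgt), 0, b2), ((1,Rgt), 0, b1)] = \<Phi> [((2,Lft), - \<phi> a2, a2), ((2,Rgt), 0, b2), ((1,Rgt), 0, b1)] + \<phi> a2 * \<Phi> [((2,Rgt), 0, b2), ((1,Rgt), 0, b1)]"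
    using cen[of "(2,Lft)" "[]" "a2" "[((2,Rgt), 0, b2), ((1,Rgt), 0, b1)]"] by (simp add: wsimps)
  show ?thesis unfolding e W_2L1c_2R1_1R1 W_2R1_1R1 by (simp add: momfacts)
qed

lemma W_1L1_2L1c: "\<Phi> [((1,Lft), 0, a1), ((2,Lft), - \<phi> a2, a2)] = 0"
  by (rule zl) (simp_all add: wsimps Q1' Q2' numeral_eq_Suc upt_rec nths_Cons mult.assoc momfacts)

lemma W_1L1_2L1: "\<Phi> [((1,Lft), 0, a1), ((2,Lft), 0, a2)] = 1 / 4"
proof -
  have e: "\<Phi> [((1,Lft), 0, a1), ((2,Lft), 0, a2)] = \<Phi> [((1,Lft), 0, a1), ((2,Lft), - \<phi> a2, a2)] + \<phi> a2 * \<Phi> [((1,Lft), 0, a1)]"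
    using cen[of "(2,Lft)" "[((1,Lft), 0, a1)]" "a2" "[]"] by (simp add: wsimps)
  show ?thesis unfolding e W_1L1_2L1c W_1L1 by (simp add: momfacts)
qed

lemma W_2L1c_1L1: "\<Phi> [((2,Lft), - \<phi> a2, a2), ((1,Lft), 0, a1)] = 0"
  by (rule zl) (simp_all add: wsimps Q1' Q2' numeral_eq_Suc upt_rec nths_Cons mult.assoc momfacts)

lemma W_2L1_1L1: "\<Phi> [((2,Lft), 0, a2), ((1,Lft), 0, a1)] = 1 / 4"
proof -
  have e: "\<Phi> [((2,Lft), 0, a2), ((1,Lft), 0, a1)] = \<Phi> [((2,Lft), - \<phi> a2, a2), ((1,Lft), 0, a1)] + \<phi> a2 * \<Phi> [((1,Lft), 0, a1)]"
    using cen[of "(2,Lft)" "[]" "a2" "[((1,Lft), 0, a1)]"] by (simp add: wsimps)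
  show ?thesis unfolding e W_2L1c_1L1 W_1L1 by (simp add: momfacts)
qed

lemma W_1L2_2R1c: "\<Phi> [((1,Lft), 0, (a1 * a1)), ((2,Rgt), - \<phi> b2, b2)] = 0"
  by (rule zl) (simp_all add: wsimps Q1' Q2' numeral_eq_Suc upt_rec nths_Cons mult.assoc momfacts)

lemma W_1L2: "\<Phi> [((1,Lft), 0, (a1 * a1))] = 1 / 2"
proof -
  have "\<Phi> [((1,Lft), 0, (a1 * a1))] = \<phi> (wprod [((1,Lft), 0, (a1 * a1))])" by (rule P1') (simp_all add: wsimps)
  also have "\<dots> = 1 / 2" by (simp add: wsimps mult.assoc momfacts)
  finally show ?thesis .
qed

lemma W_1L2_2R1: "\<Phi> [((1,Lft), 0, (a1 * a1)), ((2,Rgt), 0, b2)] = 1 / 4"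
proof -
  have e: "\<Phi> [((1,Lft), 0, (a1 * a1)), ((2,Rgt), 0, b2)] = \<Phi> [((1,Lft), 0, (a1 * a1)), ((2,Rgt), - \<phi> b2, b2)] + \<phi> b2 * \<Phi> [((1,Lft), 0, (a1 * a1))]"
    using cen[of "(2,Rgt)" "[((1,Lft), 0, (a1 * a1))]" "b2" "[]"] by (simp add: wsimps)
  show ?thesis unfolding e W_1L2_2R1c W_1L2 by (simp add: momfacts)
qed

lemma W_1L1_2L1c_1R1: "\<Phi> [((1,Lft), 0, a1), ((2,Lft), - \<phi> a2, a2), ((1,Rgt), 0, b1)] = 0"
  by (rule zl) (simp_all add: wsimps Q1' Q2' numeral_eq_Suc upt_rec nths_Cons mult.assoc momfacts)

lemma W_1L1_2L1_1R1: "\<Phi> [((1,Lft), 0, a1), ((2,Lft), 0, a2), ((1,Rgt), 0, b1)] = 0"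
proof -
  have e: "\<Phi> [((1,Lft), 0, a1), ((2,Lft), 0, a2), ((1,Rgt), 0, b1)] = \<Phi> [((1,Lft), 0, a1), ((2,Lft), - \<phi> a2, a2), ((1,Rgt), 0, b1)] + \<phi> a2 * \<Phi> [((1,Lft), 0, a1), ((1,Rgt), 0, b1)]"
    using cen[of "(2,Lft)" "[((1,Lft), 0, a1)]" "a2" "[((1,Rgt), 0, b1)]"] by (simp add: wsimps)
  show ?thesis unfolding e W_1L1_2L1c_1R1 W_1L1_1R1 by (simp add: momfacts)
qed

lemma W_1L1_2L1_2R1: "\<Phi> [((1,Lft), 0, a1), ((2,Lft), 0, a2), ((2,Rgt), 0, b2)] = 0"
  by (rule zl) (simp_all add: wsimps Q1' Q2' numeral_eq_Suc upt_rec nths_Cons mult.assoc momfacts)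

lemma W_2L1c_1L1_1R1: "\<Phi> [((2,Lft), - \<phi> a2, a2), ((1,Lft), 0, a1), ((1,Rgt), 0, b1)] = 0"
  by (rule zl) (simp_all add: wsimps Q1' Q2' numeral_eq_Suc upt_rec nths_Cons mult.assoc momfacts)

lemma W_2L1_1L1_1R1: "\<Phi> [((2,Lft), 0, a2), ((1,Lft), 0, a1), ((1,Rgt), 0, b1)] = 0"
proof -
  have e: "\<Phi> [((2,Lft), 0, a2), ((1,Lft), 0, a1), ((1,Rgt), 0, b1)] = \<Phi> [((2,Lft), - \<phi> a2, a2), ((1,Lft), 0, a1), ((1,Rgt), 0, b1)] + \<phi> a2 * \<Phi> [((1,Lft), 0, a1), ((1,Rgt), 0, b1)]"
    using cen[of "(2,Lft)" "[]" "a2" "[((1,Lft), 0, a1), ((1,Rgt), 0, b1)]"] by (simp add: wsimps)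
  show ?thesis unfolding e W_2L1c_1L1_1R1 W_1L1_1R1 by (simp add: momfacts)
qed

lemma W_2L1c_1L1_2R1c: "\<Phi> [((2,Lft), - \<phi> a2, a2), ((1,Lft), 0, a1), ((2,Rgt), - \<phi> b2, b2)] = 0"
  by (rule zl) (simp_all add: wsimps Q1' Q2' numeral_eq_Suc upt_rec nths_Cons mult.assoc momfacts)

lemma W_2L1c_1L1_2R1: "\<Phi> [((2,Lft), - \<phi> a2, a2), ((1,Lft), 0, a1), ((2,Rgt), 0, b2)] = 0"
proof -
  have e: "\<Phi> [((2,Lft), - \<phi> a2, a2), ((1,Lft), 0, a1), ((2,Rgt), 0, b2)] = \<Phi> [((2,Lft), - \<phi> a2, a2), ((1,Lft), 0, a1), ((2,Rgt), - \<phi> b2, b2)] + \<phi> b2 * \<Phi> [((2,Lft), - \<phi> a2, a2), ((1,Lft), 0, a1)]"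
    using cen[of "(2,Rgt)" "[((2,Lft), - \<phi> a2, a2), ((1,Lft), 0, a1)]" "b2" "[]"] by (simp add: wsimps)
  show ?thesis unfolding e W_2L1c_1L1_2R1c W_2L1c_1L1 by (simp add: momfacts)
qed

lemma W_2L1_1L1_2R1: "\<Phi> [((2,Lft), 0, a2), ((1,Lft), 0, a1), ((2,Rgt), 0, b2)] = 1 / 8"
proof -
  have e: "\<Phi> [((2,Lft), 0, a2), ((1,Lft), 0, a1), ((2,Rgt), 0, b2)] = \<Phi> [((2,Lft), - \<phi> a2, a2), ((1,Lft), 0, a1), ((2,Rgt), 0, b2)] + \<phi> a2 * \<Phi> [((1,Lft), 0, a1), ((2,Rgt), 0, b2)]"
    using cen[of "(2,Lft)" "[]" "a2" "[((1,Lft), 0, a1), ((2,Rgt), 0, b2)]"] by (simp add: wsimps)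
  show ?thesis unfolding e W_2L1c_1L1_2R1 W_1L1_2R1 by (simp add: momfacts)
qed

lemma W_2L2c_1R1: "\<Phi> [((2,Lft), - \<phi> (a2 * a2), (a2 * a2)), ((1,Rgt), 0, b1)] = 0"
  by (rule zl) (simp_all add: wsimps Q1' Q2' numeral_eq_Suc upt_rec nths_Cons mult.assoc momfacts)

lemma W_2L2_1R1: "\<Phi> [((2,Lft), 0, (a2 * a2)), ((1,Rgt), 0, b1)] = 1 / 4"
proof -
  have e: "\<Phi> [((2,Lft), 0, (a2 * a2)), ((1,Rgt), 0, b1)] = \<Phi> [((2,Lft), - \<phi> (a2 * a2), (a2 * a2)), ((1,Rgt), 0, b1)] + \<phi> (a2 * a2) * \<Phi> [((1,Rgt), 0, b1)]"
    using cen[of "(2,Lft)" "[]" "(a2 * a2)" "[((1,Rgt), 0, b1)]"] by (simp add: wsimps)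
  show ?thesis unfolding e W_2L2c_1R1 W_1R1 by (simp add: momfacts)
qed

lemma W_1L2_1R1_2R1c: "\<Phi> [((1,Lft), 0, (a1 * a1)), ((1,Rgt), 0, b1), ((2,Rgt), - \<phi> b2, b2)] = 0"
  by (rule zl) (simp_all add: wsimps Q1' Q2' numeral_eq_Suc upt_rec nths_Cons mult.assoc momfacts)

lemma W_1L2_1R1: "\<Phi> [((1,Lft), 0, (a1 * a1)), ((1,Rgt), 0, b1)] = 0"
proof -
  have "\<Phi> [((1,Lft), 0, (a1 * a1)), ((1,Rgt), 0, b1)] = \<phi> (wprod [((1,Lft), 0, (a1 * a1)), ((1,Rgt), 0, b1)])" by (rule P1') (simp_all add: wsimps)
  also have "\<dots> = 0" by (simp add: wsimps mult.assoc momfacts)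
  finally show ?thesis .
qed

lemma W_1L2_1R1_2R1: "\<Phi> [((1,Lft), 0, (a1 * a1)), ((1,Rgt), 0, b1), ((2,Rgt), 0, b2)] = 0"
proof -
  have e: "\<Phi> [((1,Lft), 0, (a1 * a1)), ((1,Rgt), 0, b1), ((2,Rgt), 0, b2)] = \<Phi> [((1,Lft), 0, (a1 * a1)), ((1,Rgt), 0, b1), ((2,Rgt), - \<phi> b2, b2)] + \<phi> b2 * \<Phi> [((1,Lft), 0, (a1 * a1)), ((1,Rgt), 0, b1)]"
    using cen[of "(2,Rgt)" "[((1,Lft), 0, (a1 * a1)), ((1,Rgt), 0, b1)]" "b2" "[]"] by (simp add: wsimps)
  show ?thesis unfolding e W_1L2_1R1_2R1c W_1L2_1R1 by (simp add: momfacts)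
qed

lemma W_1L2_2R1c_1R1: "\<Phi> [((1,Lft), 0, (a1 * a1)), ((2,Rgt), - \<phi> b2, b2), ((1,Rgt), 0, b1)] = 0"
  by (rule zl) (simp_all add: wsimps Q1' Q2' numeral_eq_Suc upt_rec nths_Cons mult.assoc momfacts)

lemma W_1L2_2R1_1R1: "\<Phi> [((1,Lft), 0, (a1 * a1)), ((2,Rgt), 0, b2), ((1,Rgt), 0, b1)] = 0"
proof -
  have e: "\<Phi> [((1,Lft), 0, (a1 * a1)), ((2,Rgt), 0, b2), ((1,Rgt), 0, b1)] = \<Phi> [((1,Lft), 0, (a1 * a1)), ((2,Rgt), - \<phi> b2, b2), ((1,Rgt), 0, b1)] + \<phi> b2 * \<Phi> [((1,Lft), 0, (a1 * a1)), ((1,Rgt), 0, b1)]"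
    using cen[of "(2,Rgt)" "[((1,Lft), 0, (a1 * a1))]" "b2" "[((1,Rgt), 0, b1)]"] by (simp add: wsimps)
  show ?thesis unfolding e W_1L2_2R1c_1R1 W_1L2_1R1 by (simp add: momfacts)
qed

lemma W_1L2_2R2c: "\<Phi> [((1,Lft), 0, (a1 * a1)), ((2,Rgt), - \<phi> (b2 * b2), (b2 * b2))] = 0"
  by (rule zl) (simp_all add: wsimps Q1' Q2' numeral_eq_Suc upt_rec nths_Cons mult.assoc momfacts)

lemma W_1L2_2R2: "\<Phi> [((1,Lft), 0, (a1 * a1)), ((2,Rgt), 0, (b2 * b2))] = 1 / 4"
proof -
  have e: "\<Phi> [((1,Lft), 0, (a1 * a1)), ((2,Rgt), 0, (b2 * b2))] = \<Phi> [((1,Lft), 0, (a1 * a1)), ((2,Rgt), - \<phi> (b2 * b2), (b2 * b2))] + \<phi> (b2 * b2) * \<Phi> [((1,Lft), 0, (a1 * a1))]"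
    using cen[of "(2,Rgt)" "[((1,Lft), 0, (a1 * a1))]" "(b2 * b2)" "[]"] by (simp add: wsimps)
  show ?thesis unfolding e W_1L2_2R2c W_1L2 by (simp add: momfacts)
qed

lemma W_1L1_2L1c_1R2: "\<Phi> [((1,Lft), 0, a1), ((2,Lft), - \<phi> a2, a2), ((1,Rgt), 0, (b1 * b1))] = 0"
  by (rule zl) (simp_all add: wsimps Q1' Q2' numeral_eq_Suc upt_rec nths_Cons mult.assoc momfacts)

lemma W_1L1_1R2: "\<Phi> [((1,Lft), 0, a1), ((1,Rgt), 0, (b1 * b1))] = 0"
proof -
  have "\<Phi> [((1,Lft), 0, a1), ((1,Rgt), 0, (b1 * b1))] = \<phi> (wprod [((1,Lft), 0, a1), ((1,Rgt), 0, (b1 * b1))])" by (rule P1') (simp_all add: wsimps)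
  also have "\<dots> = 0" by (simp add: wsimps mult.assoc momfacts)
  finally show ?thesis .
qed

lemma W_1L1_2L1_1R2: "\<Phi> [((1,Lft), 0, a1), ((2,Lft), 0, a2), ((1,Rgt), 0, (b1 * b1))] = 0"
proof -
  have e: "\<Phi> [((1,Lft), 0, a1), ((2,Lft), 0, a2), ((1,Rgt), 0, (b1 * b1))] = \<Phi> [((1,Lft), 0, a1), ((2,Lft), - \<phi> a2, a2), ((1,Rgt), 0, (b1 * b1))] + \<phi> a2 * \<Phi> [((1,Lft), 0, a1), ((1,Rgt), 0, (b1 * b1))]"
    using cen[of "(2,Lft)" "[((1,Lft), 0, a1)]" "a2" "[((1,Rgt), 0, (b1 * b1))]"] by (simp add: wsimps)
  show ?thesis unfolding e W_1L1_2L1c_1R2 W_1L1_1R2 by (simp add: momfacts)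
qed

lemma W_1L1_2L1_1R1_2R1: "\<Phi> [((1,Lft), 0, a1), ((2,Lft), 0, a2), ((1,Rgt), 0, b1), ((2,Rgt), 0, b2)] = 0"
  by (rule zl) (simp_all add: wsimps Q1' Q2' numeral_eq_Suc upt_rec nths_Cons mult.assoc momfacts)

lemma W_1L1_2L1c_2R1c_1R1: "\<Phi> [((1,Lft), 0, a1), ((2,Lft), - \<phi> a2, a2), ((2,Rgt), - \<phi> b2, b2), ((1,Rgt), 0, b1)] = 0"
  by (rule zl) (simp_all add: wsimps Q1' Q2' numeral_eq_Suc upt_rec nths_Cons mult.assoc momfacts)

lemma W_1L1_2L1c_2R1_1R1: "\<Phi> [((1,Lft), 0, a1), ((2,Lft), - \<phi> a2, a2), ((2,Rgt), 0, b2), ((1,Rgt), 0, b1)] = 0"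
proof -
  have e: "\<Phi> [((1,Lft), 0, a1), ((2,Lft), - \<phi> a2, a2), ((2,Rgt), 0, b2), ((1,Rgt), 0, b1)] = \<Phi> [((1,Lft), 0, a1), ((2,Lft), - \<phi> a2, a2), ((2,Rgt), - \<phi> b2, b2), ((1,Rgt), 0, b1)] + \<phi> b2 * \<Phi> [((1,Lft), 0, a1), ((2,Lft), - \<phi> a2, a2), ((1,Rgt), 0, b1)]"
    using cen[of "(2,Rgt)" "[((1,Lft), 0, a1), ((2,Lft), - \<phi> a2, a2)]" "b2" "[((1,Rgt), 0, b1)]"] by (simp add: wsimps)
  show ?thesis unfolding e W_1L1_2L1c_2R1c_1R1 W_1L1_2L1c_1R1 by (simp add: momfacts)
qed

lemma W_1L1_2L1_2R1_1R1: "\<Phi> [((1,Lft), 0, a1), ((2,Lft), 0, a2), ((2,Rgt), 0, b2), ((1,Rgt), 0, b1)] = 0"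
proof -
  have e: "\<Phi> [((1,Lft), 0, a1), ((2,Lft), 0, a2), ((2,Rgt), 0, b2), ((1,Rgt), 0, b1)] = \<Phi> [((1,Lft), 0, a1), ((2,Lft), - \<phi> a2, a2), ((2,Rgt), 0, b2), ((1,Rgt), 0, b1)] + \<phi> a2 * \<Phi> [((1,Lft), 0, a1), ((2,Rgt), 0, b2), ((1,Rgt), 0, b1)]"
    using cen[of "(2,Lft)" "[((1,Lft), 0, a1)]" "a2" "[((2,Rgt), 0, b2), ((1,Rgt), 0, b1)]"] by (simp add: wsimps)
  show ?thesis unfolding e W_1L1_2L1c_2R1_1R1 W_1L1_2R1_1R1 by (simp add: momfacts)
qed

lemma W_1L1_2L1_2R2: "\<Phi> [((1,Lft), 0, a1), ((2,Lft), 0, a2), ((2,Rgt), 0, (b2 * b2))] = 0"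
  by (rule zl) (simp_all add: wsimps Q1' Q2' numeral_eq_Suc upt_rec nths_Cons mult.assoc momfacts)

lemma W_2L1c_1L1_1R2: "\<Phi> [((2,Lft), - \<phi> a2, a2), ((1,Lft), 0, a1), ((1,Rgt), 0, (b1 * b1))] = 0"
  by (rule zl) (simp_all add: wsimps Q1' Q2' numeral_eq_Suc upt_rec nths_Cons mult.assoc momfacts)

lemma W_2L1_1L1_1R2: "\<Phi> [((2,Lft), 0, a2), ((1,Lft), 0, a1), ((1,Rgt), 0, (b1 * b1))] = 0"
proof -
  have e: "\<Phi> [((2,Lft), 0, a2), ((1,Lft), 0, a1), ((1,Rgt), 0, (b1 * b1))] = \<Phi> [((2,Lft), - \<phi> a2, a2), ((1,Lft), 0, a1), ((1,Rgt), 0, (b1 * b1))] + \<phi> a2 * \<Phi> [((1,Lft), 0, a1), ((1,Rgt), 0, (b1 * b1))]"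
    using cen[of "(2,Lft)" "[]" "a2" "[((1,Lft), 0, a1), ((1,Rgt), 0, (b1 * b1))]"] by (simp add: wsimps)
  show ?thesis unfolding e W_2L1c_1L1_1R2 W_1L1_1R2 by (simp add: momfacts)
qed

lemma W_2L1c_1L1_1R1_2R1c: "\<Phi> [((2,Lft), - \<phi> a2, a2), ((1,Lft), 0, a1), ((1,Rgt), 0, b1), ((2,Rgt), - \<phi> b2, b2)] = 0"
  by (rule zl) (simp_all add: wsimps Q1' Q2' numeral_eq_Suc upt_rec nths_Cons mult.assoc momfacts)

lemma W_2L1c_1L1_1R1_2R1: "\<Phi> [((2,Lft), - \<phi> a2, a2), ((1,Lft), 0, a1), ((1,Rgt), 0, b1), ((2,Rgt), 0, b2)] = 0"
proof -
  have e: "\<Phi> [((2,Lft), - \<phi> a2, a2), ((1,Lft), 0, a1), ((1,Rgt), 0, b1), ((2,Rgt), 0, b2)] = \<Phi> [((2,Lft), - \<phi> a2, a2), ((1,Lft), 0, a1), ((1,Rgt), 0, b1), ((2,Rgt), - \<phi> b2, b2)] + \<phi> b2 * \<Phi> [((2,Lft), - \<phi> a2, a2), ((1,Lft), 0, a1), ((1,Rgt), 0, b1)]"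
    using cen[of "(2,Rgt)" "[((2,Lft), - \<phi> a2, a2), ((1,Lft), 0, a1), ((1,Rgt), 0, b1)]" "b2" "[]"] by (simp add: wsimps)
  show ?thesis unfolding e W_2L1c_1L1_1R1_2R1c W_2L1c_1L1_1R1 by (simp add: momfacts)
qed

lemma W_2L1_1L1_1R1_2R1: "\<Phi> [((2,Lft), 0, a2), ((1,Lft), 0, a1), ((1,Rgt), 0, b1), ((2,Rgt), 0, b2)] = 0"
proof -
  have e: "\<Phi> [((2,Lft), 0, a2), ((1,Lft), 0, a1), ((1,Rgt), 0, b1), ((2,Rgt), 0, b2)] = \<Phi> [((2,Lft), - \<phi> a2, a2), ((1,Lft), 0, a1), ((1,Rgt), 0, b1), ((2,Rgt), 0, b2)] + \<phi> a2 * \<Phi> [((1,Lft), 0, a1), ((1,Rgt), 0, b1), ((2,Rgt), 0, b2)]"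
    using cen[of "(2,Lft)" "[]" "a2" "[((1,Lft), 0, a1), ((1,Rgt), 0, b1), ((2,Rgt), 0, b2)]"] by (simp add: wsimps)
  show ?thesis unfolding e W_2L1c_1L1_1R1_2R1 W_1L1_1R1_2R1 by (simp add: momfacts)
qed

lemma W_2L1c_1L1_2R1c_1R1: "\<Phi> [((2,Lft), - \<phi> a2, a2), ((1,Lft), 0, a1), ((2,Rgt), - \<phi> b2, b2), ((1,Rgt), 0, b1)] = 0"
  by (rule zl) (simp_all add: wsimps Q1' Q2' numeral_eq_Suc upt_rec nths_Cons mult.assoc momfacts)

lemma W_2L1c_1L1_2R1_1R1: "\<Phi> [((2,Lft), - \<phi> a2, a2), ((1,Lft), 0, a1), ((2,Rgt), 0, b2), ((1,Rgt), 0, b1)] = 0"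
proof -
  have e: "\<Phi> [((2,Lft), - \<phi> a2, a2), ((1,Lft), 0, a1), ((2,Rgt), 0, b2), ((1,Rgt), 0, b1)] = \<Phi> [((2,Lft), - \<phi> a2, a2), ((1,Lft), 0, a1), ((2,Rgt), - \<phi> b2, b2), ((1,Rgt), 0, b1)] + \<phi> b2 * \<Phi> [((2,Lft), - \<phi> a2, a2), ((1,Lft), 0, a1), ((1,Rgt), 0, b1)]"
    using cen[of "(2,Rgt)" "[((2,Lft), - \<phi> a2, a2), ((1,Lft), 0, a1)]" "b2" "[((1,Rgt), 0, b1)]"] by (simp add: wsimps)
  show ?thesis unfolding e W_2L1c_1L1_2R1c_1R1 W_2L1c_1L1_1R1 by (simp add: momfacts)
qed

lemma W_2L1_1L1_2R1_1R1: "\<Phi> [((2,Lft), 0, a2), ((1,Lft), 0, a1), ((2,Rgt), 0, b2), ((1,Rgt), 0, b1)] = 0"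
proof -
  have e: "\<Phi> [((2,Lft), 0, a2), ((1,Lft), 0, a1), ((2,Rgt), 0, b2), ((1,Rgt), 0, b1)] = \<Phi> [((2,Lft), - \<phi> a2, a2), ((1,Lft), 0, a1), ((2,Rgt), 0, b2), ((1,Rgt), 0, b1)] + \<phi> a2 * \<Phi> [((1,Lft), 0, a1), ((2,Rgt), 0, b2), ((1,Rgt), 0, b1)]"
    using cen[of "(2,Lft)" "[]" "a2" "[((1,Lft), 0, a1), ((2,Rgt), 0, b2), ((1,Rgt), 0, b1)]"] by (simp add: wsimps)
  show ?thesis unfolding e W_2L1c_1L1_2R1_1R1 W_1L1_2R1_1R1 by (simp add: momfacts)
qed

lemma W_2L1c_1L1_2R2c: "\<Phi> [((2,Lft), - \<phi> a2, a2), ((1,Lft), 0, a1), ((2,Rgt), - \<phi> (b2 * b2), (b2 * b2))] = 0"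
  by (rule zl) (simp_all add: wsimps Q1' Q2' numeral_eq_Suc upt_rec nths_Cons mult.assoc momfacts)

lemma W_2L1c_1L1_2R2: "\<Phi> [((2,Lft), - \<phi> a2, a2), ((1,Lft), 0, a1), ((2,Rgt), 0, (b2 * b2))] = 0"
proof -
  have e: "\<Phi> [((2,Lft), - \<phi> a2, a2), ((1,Lft), 0, a1), ((2,Rgt), 0, (b2 * b2))] = \<Phi> [((2,Lft), - \<phi> a2, a2), ((1,Lft), 0, a1), ((2,Rgt), - \<phi> (b2 * b2), (b2 * b2))] + \<phi> (b2 * b2) * \<Phi> [((2,Lft), - \<phi> a2, a2), ((1,Lft), 0, a1)]"
    using cen[of "(2,Rgt)" "[((2,Lft), - \<phi> a2, a2), ((1,Lft), 0, a1)]" "(b2 * b2)" "[]"] by (simp add: wsimps)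
  show ?thesis unfolding e W_2L1c_1L1_2R2c W_2L1c_1L1 by (simp add: momfacts)
qed

lemma W_2L1_1L1_2R2: "\<Phi> [((2,Lft), 0, a2), ((1,Lft), 0, a1), ((2,Rgt), 0, (b2 * b2))] = 1 / 8"
proof -
  have e: "\<Phi> [((2,Lft), 0, a2), ((1,Lft), 0, a1), ((2,Rgt), 0, (b2 * b2))] = \<Phi> [((2,Lft), - \<phi> a2, a2), ((1,Lft), 0, a1), ((2,Rgt), 0, (b2 * b2))] + \<phi> a2 * \<Phi> [((1,Lft), 0, a1), ((2,Rgt), 0, (b2 * b2))]"
    using cen[of "(2,Lft)" "[]" "a2" "[((1,Lft), 0, a1), ((2,Rgt), 0, (b2 * b2))]"] by (simp add: wsimps)
  show ?thesis unfolding e W_2L1c_1L1_2R2 W_1L1_2R2 by (simp add: momfacts)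
qed

lemma W_2L2c_1R2: "\<Phi> [((2,Lft), - \<phi> (a2 * a2), (a2 * a2)), ((1,Rgt), 0, (b1 * b1))] = 0"
  by (rule zl) (simp_all add: wsimps Q1' Q2' numeral_eq_Suc upt_rec nths_Cons mult.assoc momfacts)

lemma W_2L2_1R2: "\<Phi> [((2,Lft), 0, (a2 * a2)), ((1,Rgt), 0, (b1 * b1))] = 1 / 4"
proof -
  have e: "\<Phi> [((2,Lft), 0, (a2 * a2)), ((1,Rgt), 0, (b1 * b1))] = \<Phi> [((2,Lft), - \<phi> (a2 * a2), (a2 * a2)), ((1,Rgt), 0, (b1 * b1))] + \<phi> (a2 * a2) * \<Phi> [((1,Rgt), 0, (b1 * b1))]"
    using cen[of "(2,Lft)" "[]" "(a2 * a2)" "[((1,Rgt), 0, (b1 * b1))]"] by (simp add: wsimps)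
  show ?thesis unfolding e W_2L2c_1R2 W_1R2 by (simp add: momfacts)
qed

lemma W_2L2_1R1_2R1: "\<Phi> [((2,Lft), 0, (a2 * a2)), ((1,Rgt), 0, b1), ((2,Rgt), 0, b2)] = 0"
  by (rule zl) (simp_all add: wsimps Q1' Q2' numeral_eq_Suc upt_rec nths_Cons mult.assoc momfacts)

lemma W_2L2c_2R1c_1R1: "\<Phi> [((2,Lft), - \<phi> (a2 * a2), (a2 * a2)), ((2,Rgt), - \<phi> b2, b2), ((1,Rgt), 0, b1)] = 0"
  by (rule zl) (simp_all add: wsimps Q1' Q2' numeral_eq_Suc upt_rec nths_Cons mult.assoc momfacts)

lemma W_2L2c_2R1_1R1: "\<Phi> [((2,Lft), - \<phi> (a2 * a2), (a2 * a2)), ((2,Rgt), 0, b2), ((1,Rgt), 0, b1)] = 0"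
proof -
  have e: "\<Phi> [((2,Lft), - \<phi> (a2 * a2), (a2 * a2)), ((2,Rgt), 0, b2), ((1,Rgt), 0, b1)] = \<Phi> [((2,Lft), - \<phi> (a2 * a2), (a2 * a2)), ((2,Rgt), - \<phi> b2, b2), ((1,Rgt), 0, b1)] + \<phi> b2 * \<Phi> [((2,Lft), - \<phi> (a2 * a2), (a2 * a2)), ((1,Rgt), 0, b1)]"
    using cen[of "(2,Rgt)" "[((2,Lft), - \<phi> (a2 * a2), (a2 * a2))]" "b2" "[((1,Rgt), 0, b1)]"] by (simp add: wsimps)
  show ?thesis unfolding e W_2L2c_2R1c_1R1 W_2L2c_1R1 by (simp add: momfacts)
qed

lemma W_2L2_2R1_1R1: "\<Phi> [((2,Lft), 0, (a2 * a2)), ((2,Rgt), 0, b2), ((1,Rgt), 0, b1)] = 1 / 8"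
proof -
  have e: "\<Phi> [((2,Lft), 0, (a2 * a2)), ((2,Rgt), 0, b2), ((1,Rgt), 0, b1)] = \<Phi> [((2,Lft), - \<phi> (a2 * a2), (a2 * a2)), ((2,Rgt), 0, b2), ((1,Rgt), 0, b1)] + \<phi> (a2 * a2) * \<Phi> [((2,Rgt), 0, b2), ((1,Rgt), 0, b1)]"
    using cen[of "(2,Lft)" "[]" "(a2 * a2)" "[((2,Rgt), 0, b2), ((1,Rgt), 0, b1)]"] by (simp add: wsimps)
  show ?thesis unfolding e W_2L2c_2R1_1R1 W_2R1_1R1 by (simp add: momfacts)
qed

lemma mono__12: "\<phi> (b1 * b2) = 1 / 4"
proof -
  have "\<phi> (b1 * b2) = \<phi> (wprod [((1,Rgt), 0, b1), ((2,Rgt), 0, b2)])" by (simp add: wsimps mult.assoc)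
  also have "\<dots> = \<Phi> [((1,Rgt), 0, b1), ((2,Rgt), 0, b2)]" by (rule link') (simp_all add: wsimps)
  also have "\<dots> = 1 / 4" by (rule W_1R1_2R1)
  finally show ?thesis .
qed

lemma mono__21: "\<phi> (b2 * b1) = 1 / 4"
proof -
  have "\<phi> (b2 * b1) = \<phi> (wprod [((2,Rgt), 0, b2), ((1,Rgt), 0, b1)])" by (simp add: wsimps mult.assoc)
  also have "\<dots> = \<Phi> [((2,Rgt), 0, b2), ((1,Rgt), 0, b1)]" by (rule link') (simp_all add: wsimps)
  also have "\<dots> = 1 / 4" by (rule W_2R1_1R1)
  finally show ?thesis .
qed

lemma mono_1_2: "\<phi> (a1 * b2) = 1 / 4"
proof -
  have "\<phi> (a1 * b2) = \<phi> (wprod [((1,Lft), 0, a1), ((2,Rgt), 0, b2)])" by (simp add: wsimps mult.assoc)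
  also have "\<dots> = \<Phi> [((1,Lft), 0, a1), ((2,Rgt), 0, b2)]" by (rule link') (simp_all add: wsimps)
  also have "\<dots> = 1 / 4" by (rule W_1L1_2R1)
  finally show ?thesis .
qed

lemma mono_2_1: "\<phi> (a2 * b1) = 1 / 4"
proof -
  have "\<phi> (a2 * b1) = \<phi> (wprod [((2,Lft), 0, a2), ((1,Rgt), 0, b1)])" by (simp add: wsimps mult.assoc)
  also have "\<dots> = \<Phi> [((2,Lft), 0, a2), ((1,Rgt), 0, b1)]" by (rule link') (simp_all add: wsimps)
  also have "\<dots> = 1 / 4" by (rule W_2L1_1R1)
  finally show ?thesis .
qed

lemma mono_1_12: "\<phi> (a1 * (b1 * b2)) = 0"
proof -
  have "\<phi> (a1 * (b1 * b2)) = \<phi> (wprod [((1,Lft), 0, a1), ((1,Rgt), 0, b1), ((2,Rgt), 0, b2)])" by (simp add: wsimps mult.assoc)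
  also have "\<dots> = \<Phi> [((1,Lft), 0, a1), ((1,Rgt), 0, b1), ((2,Rgt), 0, b2)]" by (rule link') (simp_all add: wsimps)
  also have "\<dots> = 0" by (rule W_1L1_1R1_2R1)
  finally show ?thesis .
qed

lemma mono_1_21: "\<phi> (a1 * (b2 * b1)) = 0"
proof -
  have "\<phi> (a1 * (b2 * b1)) = \<phi> (wprod [((1,Lft), 0, a1), ((2,Rgt), 0, b2), ((1,Rgt), 0, b1)])" by (simp add: wsimps mult.assoc)
  also have "\<dots> = \<Phi> [((1,Lft), 0, a1), ((2,Rgt), 0, b2), ((1,Rgt), 0, b1)]" by (rule link') (simp_all add: wsimps)
  also have "\<dots> = 0" by (rule W_1L1_2R1_1R1)
  finally show ?thesis .
qed

lemma mono_1_22: "\<phi> (a1 * (b2 * b2)) = 1 / 4"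
proof -
  have "\<phi> (a1 * (b2 * b2)) = \<phi> (wprod [((1,Lft), 0, a1), ((2,Rgt), 0, (b2 * b2))])" by (simp add: wsimps mult.assoc)
  also have "\<dots> = \<Phi> [((1,Lft), 0, a1), ((2,Rgt), 0, (b2 * b2))]" by (rule link') (simp_all add: wsimps)
  also have "\<dots> = 1 / 4" by (rule W_1L1_2R2)
  finally show ?thesis .
qed

lemma mono_2_11: "\<phi> (a2 * (b1 * b1)) = 1 / 4"
proof -
  have "\<phi> (a2 * (b1 * b1)) = \<phi> (wprod [((2,Lft), 0, a2), ((1,Rgt), 0, (b1 * b1))])" by (simp add: wsimps mult.assoc)
  also have "\<dots> = \<Phi> [((2,Lft), 0, a2), ((1,Rgt), 0, (b1 * b1))]" by (rule link') (simp_all add: wsimps)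
  also have "\<dots> = 1 / 4" by (rule W_2L1_1R2)
  finally show ?thesis .
qed

lemma mono_2_12: "\<phi> (a2 * (b1 * b2)) = 0"
proof -
  have "\<phi> (a2 * (b1 * b2)) = \<phi> (wprod [((2,Lft), 0, a2), ((1,Rgt), 0, b1), ((2,Rgt), 0, b2)])" by (simp add: wsimps mult.assoc)
  also have "\<dots> = \<Phi> [((2,Lft), 0, a2), ((1,Rgt), 0, b1), ((2,Rgt), 0, b2)]" by (rule link') (simp_all add: wsimps)
  also have "\<dots> = 0" by (rule W_2L1_1R1_2R1)
  finally show ?thesis .
qed

lemma mono_2_21: "\<phi> (a2 * (b2 * b1)) = 1 / 8"
proof -
  have "\<phi> (a2 * (b2 * b1)) = \<phi> (wprod [((2,Lft), 0, a2), ((2,Rgt), 0, b2), ((1,Rgt), 0, b1)])" by (simp add: wsimps mult.assoc)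
  also have "\<dots> = \<Phi> [((2,Lft), 0, a2), ((2,Rgt), 0, b2), ((1,Rgt), 0, b1)]" by (rule link') (simp_all add: wsimps)
  also have "\<dots> = 1 / 8" by (rule W_2L1_2R1_1R1)
  finally show ?thesis .
qed

lemma mono_12_: "\<phi> (a1 * a2) = 1 / 4"
proof -
  have "\<phi> (a1 * a2) = \<phi> (wprod [((1,Lft), 0, a1), ((2,Lft), 0, a2)])" by (simp add: wsimps mult.assoc)
  also have "\<dots> = \<Phi> [((1,Lft), 0, a1), ((2,Lft), 0, a2)]" by (rule link') (simp_all add: wsimps)
  also have "\<dots> = 1 / 4" by (rule W_1L1_2L1)
  finally show ?thesis .
qed

lemma mono_21_: "\<phi> (a2 * a1) = 1 / 4"
proof -
  have "\<phi> (a2 * a1) = \<phi> (wprod [((2,Lft), 0, a2), ((1,Lft), 0, a1)])" by (simp add: wsimps mult.assoc)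
  also have "\<dots> = \<Phi> [((2,Lft), 0, a2), ((1,Lft), 0, a1)]" by (rule link') (simp_all add: wsimps)
  also have "\<dots> = 1 / 4" by (rule W_2L1_1L1)
  finally show ?thesis .
qed

lemma mono_11_2: "\<phi> (a1 * (a1 * b2)) = 1 / 4"
proof -
  have "\<phi> (a1 * (a1 * b2)) = \<phi> (wprod [((1,Lft), 0, (a1 * a1)), ((2,Rgt), 0, b2)])" by (simp add: wsimps mult.assoc)
  also have "\<dots> = \<Phi> [((1,Lft), 0, (a1 * a1)), ((2,Rgt), 0, b2)]" by (rule link') (simp_all add: wsimps)
  also have "\<dots> = 1 / 4" by (rule W_1L2_2R1)
  finally show ?thesis .
qed

lemma mono_12_1: "\<phi> (a1 * (a2 * b1)) = 0"
proof -
  have "\<phi> (a1 * (a2 * b1)) = \<phi> (wprod [((1,Lft), 0, a1), ((2,Lft), 0, a2), ((1,Rgt), 0, b1)])" by (simp add: wsimps mult.assoc)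
  also have "\<dots> = \<Phi> [((1,Lft), 0, a1), ((2,Lft), 0, a2), ((1,Rgt), 0, b1)]" by (rule link') (simp_all add: wsimps)
  also have "\<dots> = 0" by (rule W_1L1_2L1_1R1)
  finally show ?thesis .
qed

lemma mono_12_2: "\<phi> (a1 * (a2 * b2)) = 0"
proof -
  have "\<phi> (a1 * (a2 * b2)) = \<phi> (wprod [((1,Lft), 0, a1), ((2,Lft), 0, a2), ((2,Rgt), 0, b2)])" by (simp add: wsimps mult.assoc)
  also have "\<dots> = \<Phi> [((1,Lft), 0, a1), ((2,Lft), 0, a2), ((2,Rgt), 0, b2)]" by (rule link') (simp_all add: wsimps)
  also have "\<dots> = 0" by (rule W_1L1_2L1_2R1)
  finally show ?thesis .
qed

lemma mono_21_1: "\<phi> (a2 * (a1 * b1)) = 0"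
proof -
  have "\<phi> (a2 * (a1 * b1)) = \<phi> (wprod [((2,Lft), 0, a2), ((1,Lft), 0, a1), ((1,Rgt), 0, b1)])" by (simp add: wsimps mult.assoc)
  also have "\<dots> = \<Phi> [((2,Lft), 0, a2), ((1,Lft), 0, a1), ((1,Rgt), 0, b1)]" by (rule link') (simp_all add: wsimps)
  also have "\<dots> = 0" by (rule W_2L1_1L1_1R1)
  finally show ?thesis .
qed

lemma mono_21_2: "\<phi> (a2 * (a1 * b2)) = 1 / 8"
proof -
  have "\<phi> (a2 * (a1 * b2)) = \<phi> (wprod [((2,Lft), 0, a2), ((1,Lft), 0, a1), ((2,Rgt), 0, b2)])" by (simp add: wsimps mult.assoc)
  also have "\<dots> = \<Phi> [((2,Lft), 0, a2), ((1,Lft), 0, a1), ((2,Rgt), 0, b2)]" by (rule link') (simp_all add: wsimps)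
  also have "\<dots> = 1 / 8" by (rule W_2L1_1L1_2R1)
  finally show ?thesis .
qed

lemma mono_22_1: "\<phi> (a2 * (a2 * b1)) = 1 / 4"
proof -
  have "\<phi> (a2 * (a2 * b1)) = \<phi> (wprod [((2,Lft), 0, (a2 * a2)), ((1,Rgt), 0, b1)])" by (simp add: wsimps mult.assoc)
  also have "\<dots> = \<Phi> [((2,Lft), 0, (a2 * a2)), ((1,Rgt), 0, b1)]" by (rule link') (simp_all add: wsimps)
  also have "\<dots> = 1 / 4" by (rule W_2L2_1R1)
  finally show ?thesis .
qed

lemma mono_11_12: "\<phi> (a1 * (a1 * (b1 * b2))) = 0"
proof -
  have "\<phi> (a1 * (a1 * (b1 * b2))) = \<phi> (wprod [((1,Lft), 0, (a1 * a1)), ((1,Rgt), 0, b1), ((2,Rgt), 0, b2)])" by (simp add: wsimps mult.assoc)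
  also have "\<dots> = \<Phi> [((1,Lft), 0, (a1 * a1)), ((1,Rgt), 0, b1), ((2,Rgt), 0, b2)]" by (rule link') (simp_all add: wsimps)
  also have "\<dots> = 0" by (rule W_1L2_1R1_2R1)
  finally show ?thesis .
qed

lemma mono_11_21: "\<phi> (a1 * (a1 * (b2 * b1))) = 0"
proof -
  have "\<phi> (a1 * (a1 * (b2 * b1))) = \<phi> (wprod [((1,Lft), 0, (a1 * a1)), ((2,Rgt), 0, b2), ((1,Rgt), 0, b1)])" by (simp add: wsimps mult.assoc)
  also have "\<dots> = \<Phi> [((1,Lft), 0, (a1 * a1)), ((2,Rgt), 0, b2), ((1,Rgt), 0, b1)]" by (rule link') (simp_all add: wsimps)
  also have "\<dots> = 0" by (rule W_1L2_2R1_1R1)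
  finally show ?thesis .
qed

lemma mono_11_22: "\<phi> (a1 * (a1 * (b2 * b2))) = 1 / 4"
proof -
  have "\<phi> (a1 * (a1 * (b2 * b2))) = \<phi> (wprod [((1,Lft), 0, (a1 * a1)), ((2,Rgt), 0, (b2 * b2))])" by (simp add: wsimps mult.assoc)
  also have "\<dots> = \<Phi> [((1,Lft), 0, (a1 * a1)), ((2,Rgt), 0, (b2 * b2))]" by (rule link') (simp_all add: wsimps)
  also have "\<dots> = 1 / 4" by (rule W_1L2_2R2)
  finally show ?thesis .
qed

lemma mono_12_11: "\<phi> (a1 * (a2 * (b1 * b1))) = 0"
proof -
  have "\<phi> (a1 * (a2 * (b1 * b1))) = \<phi> (wprod [((1,Lft), 0, a1), ((2,Lft), 0, a2), ((1,Rgt), 0, (b1 * b1))])" by (simp add: wsimps mult.assoc)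
  also have "\<dots> = \<Phi> [((1,Lft), 0, a1), ((2,Lft), 0, a2), ((1,Rgt), 0, (b1 * b1))]" by (rule link') (simp_all add: wsimps)
  also have "\<dots> = 0" by (rule W_1L1_2L1_1R2)
  finally show ?thesis .
qed

lemma mono_12_12: "\<phi> (a1 * (a2 * (b1 * b2))) = 0"
proof -
  have "\<phi> (a1 * (a2 * (b1 * b2))) = \<phi> (wprod [((1,Lft), 0, a1), ((2,Lft), 0, a2), ((1,Rgt), 0, b1), ((2,Rgt), 0, b2)])" by (simp add: wsimps mult.assoc)
  also have "\<dots> = \<Phi> [((1,Lft), 0, a1), ((2,Lft), 0, a2), ((1,Rgt), 0, b1), ((2,Rgt), 0, b2)]" by (rule link') (simp_all add: wsimps)
  also have "\<dots> = 0" by (rule W_1L1_2L1_1R1_2R1)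
  finally show ?thesis .
qed

lemma mono_12_21: "\<phi> (a1 * (a2 * (b2 * b1))) = 0"
proof -
  have "\<phi> (a1 * (a2 * (b2 * b1))) = \<phi> (wprod [((1,Lft), 0, a1), ((2,Lft), 0, a2), ((2,Rgt), 0, b2), ((1,Rgt), 0, b1)])" by (simp add: wsimps mult.assoc)
  also have "\<dots> = \<Phi> [((1,Lft), 0, a1), ((2,Lft), 0, a2), ((2,Rgt), 0, b2), ((1,Rgt), 0, b1)]" by (rule link') (simp_all add: wsimps)
  also have "\<dots> = 0" by (rule W_1L1_2L1_2R1_1R1)
  finally show ?thesis .
qed

lemma mono_12_22: "\<phi> (a1 * (a2 * (b2 * b2))) = 0"
proof -
  have "\<phi> (a1 * (a2 * (b2 * b2))) = \<phi> (wprod [((1,Lft), 0, a1), ((2,Lft), 0, a2), ((2,Rgt), 0, (b2 * b2))])" by (simp add: wsimps mult.assoc)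
  also have "\<dots> = \<Phi> [((1,Lft), 0, a1), ((2,Lft), 0, a2), ((2,Rgt), 0, (b2 * b2))]" by (rule link') (simp_all add: wsimps)
  also have "\<dots> = 0" by (rule W_1L1_2L1_2R2)
  finally show ?thesis .
qed

lemma mono_21_11: "\<phi> (a2 * (a1 * (b1 * b1))) = 0"
proof -
  have "\<phi> (a2 * (a1 * (b1 * b1))) = \<phi> (wprod [((2,Lft), 0, a2), ((1,Lft), 0, a1), ((1,Rgt), 0, (b1 * b1))])" by (simp add: wsimps mult.assoc)
  also have "\<dots> = \<Phi> [((2,Lft), 0, a2), ((1,Lft), 0, a1), ((1,Rgt), 0, (b1 * b1))]" by (rule link') (simp_all add: wsimps)
  also have "\<dots> = 0" by (rule W_2L1_1L1_1R2)
  finally show ?thesis .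
qed

lemma mono_21_12: "\<phi> (a2 * (a1 * (b1 * b2))) = 0"
proof -
  have "\<phi> (a2 * (a1 * (b1 * b2))) = \<phi> (wprod [((2,Lft), 0, a2), ((1,Lft), 0, a1), ((1,Rgt), 0, b1), ((2,Rgt), 0, b2)])" by (simp add: wsimps mult.assoc)
  also have "\<dots> = \<Phi> [((2,Lft), 0, a2), ((1,Lft), 0, a1), ((1,Rgt), 0, b1), ((2,Rgt), 0, b2)]" by (rule link') (simp_all add: wsimps)
  also have "\<dots> = 0" by (rule W_2L1_1L1_1R1_2R1)
  finally show ?thesis .
qed

lemma mono_21_21: "\<phi> (a2 * (a1 * (b2 * b1))) = 0"
proof -
  have "\<phi> (a2 * (a1 * (b2 * b1))) = \<phi> (wprod [((2,Lft), 0, a2), ((1,Lft), 0, a1), ((2,Rgt), 0, b2), ((1,Rgt), 0, b1)])" by (simp add: wsimps mult.assoc)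
  also have "\<dots> = \<Phi> [((2,Lft), 0, a2), ((1,Lft), 0, a1), ((2,Rgt), 0, b2), ((1,Rgt), 0, b1)]" by (rule link') (simp_all add: wsimps)
  also have "\<dots> = 0" by (rule W_2L1_1L1_2R1_1R1)
  finally show ?thesis .
qed

lemma mono_21_22: "\<phi> (a2 * (a1 * (b2 * b2))) = 1 / 8"
proof -
  have "\<phi> (a2 * (a1 * (b2 * b2))) = \<phi> (wprod [((2,Lft), 0, a2), ((1,Lft), 0, a1), ((2,Rgt), 0, (b2 * b2))])" by (simp add: wsimps mult.assoc)
  also have "\<dots> = \<Phi> [((2,Lft), 0, a2), ((1,Lft), 0, a1), ((2,Rgt), 0, (b2 * b2))]" by (rule link') (simp_all add: wsimps)
  also have "\<dots> = 1 / 8" by (rule W_2L1_1L1_2R2)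
  finally show ?thesis .
qed

lemma mono_22_11: "\<phi> (a2 * (a2 * (b1 * b1))) = 1 / 4"
proof -
  have "\<phi> (a2 * (a2 * (b1 * b1))) = \<phi> (wprod [((2,Lft), 0, (a2 * a2)), ((1,Rgt), 0, (b1 * b1))])" by (simp add: wsimps mult.assoc)
  also have "\<dots> = \<Phi> [((2,Lft), 0, (a2 * a2)), ((1,Rgt), 0, (b1 * b1))]" by (rule link') (simp_all add: wsimps)
  also have "\<dots> = 1 / 4" by (rule W_2L2_1R2)
  finally show ?thesis .
qed

lemma mono_22_12: "\<phi> (a2 * (a2 * (b1 * b2))) = 0"
proof -
  have "\<phi> (a2 * (a2 * (b1 * b2))) = \<phi> (wprod [((2,Lft), 0, (a2 * a2)), ((1,Rgt), 0, b1), ((2,Rgt), 0, b2)])" by (simp add: wsimps mult.assoc)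
  also have "\<dots> = \<Phi> [((2,Lft), 0, (a2 * a2)), ((1,Rgt), 0, b1), ((2,Rgt), 0, b2)]" by (rule link') (simp_all add: wsimps)
  also have "\<dots> = 0" by (rule W_2L2_1R1_2R1)
  finally show ?thesis .
qed

lemma mono_22_21: "\<phi> (a2 * (a2 * (b2 * b1))) = 1 / 8"
proof -
  have "\<phi> (a2 * (a2 * (b2 * b1))) = \<phi> (wprod [((2,Lft), 0, (a2 * a2)), ((2,Rgt), 0, b2), ((1,Rgt), 0, b1)])" by (simp add: wsimps mult.assoc)
  also have "\<dots> = \<Phi> [((2,Lft), 0, (a2 * a2)), ((2,Rgt), 0, b2), ((1,Rgt), 0, b1)]" by (rule link') (simp_all add: wsimps)
  also have "\<dots> = 1 / 8" by (rule W_2L2_2R1_1R1)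
  finally show ?thesis .
qed

lemmas monofacts = mono__12 mono__21 mono_1_2 mono_2_1 mono_1_12 mono_1_21 mono_1_22 mono_2_11 mono_2_12 mono_2_21 mono_12_ mono_21_ mono_11_2 mono_12_1 mono_12_2 mono_21_1 mono_21_2 mono_22_1 mono_11_12 mono_11_21 mono_11_22 mono_12_11 mono_12_12 mono_12_21 mono_12_22 mono_21_11 mono_21_12 mono_21_21 mono_21_22 mono_22_11 mono_22_12 mono_22_21

lemma M00: "\<phi> ((a1 + a2) ^ 0 * (b1 + b2) ^ 0) = 1"
  by (simp add: power2_eq_square distrib_left distrib_right mult.assoc momfacts monofacts)

lemma M01: "\<phi> ((a1 + a2) ^ 0 * (b1 + b2) ^ 1) = 1"
  by (simp add: power2_eq_square distrib_left distrib_right mult.assoc momfacts monofacts)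

lemma M02: "\<phi> ((a1 + a2) ^ 0 * (b1 + b2) ^ 2) = 3 / 2"
  by (simp add: power2_eq_square distrib_left distrib_right mult.assoc momfacts monofacts)

lemma M10: "\<phi> ((a1 + a2) ^ 1 * (b1 + b2) ^ 0) = 1"
  by (simp add: power2_eq_square distrib_left distrib_right mult.assoc momfacts monofacts)

lemma M11: "\<phi> ((a1 + a2) ^ 1 * (b1 + b2) ^ 1) = 1 / 2"
  by (simp add: power2_eq_square distrib_left distrib_right mult.assoc momfacts monofacts)

lemma M12: "\<phi> ((a1 + a2) ^ 1 * (b1 + b2) ^ 2) = 5 / 8"
  by (simp add: power2_eq_square distrib_left distrib_right mult.assoc momfacts monofacts)

lemma M20: "\<phi> ((a1 + a2) ^ 2 * (b1 + b2) ^ 0) = 3 / 2"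
  by (simp add: power2_eq_square distrib_left distrib_right mult.assoc momfacts monofacts)

lemma M21: "\<phi> ((a1 + a2) ^ 2 * (b1 + b2) ^ 1) = 5 / 8"
  by (simp add: power2_eq_square distrib_left distrib_right mult.assoc momfacts monofacts)

lemma M22: "\<phi> ((a1 + a2) ^ 2 * (b1 + b2) ^ 2) = 3 / 4"
  by (simp add: power2_eq_square distrib_left distrib_right mult.assoc momfacts monofacts)

lemma Xeq: "mat 4 4 (\<lambda>(r, s). \<phi> ((a1 + a2) ^ (fst (idx ! r) + fst (idx ! s))
                                   * (b1 + b2) ^ (snd (idx ! r) + snd (idx ! s)))) = mat_of_rows_list 4 [[1, 1, 1, 1/2], [1, 3/2, 1/2, 5/8], [1, 1/2, 3/2, 5/8], [1/2, 5/8, 5/8, 3/4]]"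
  apply (rule eq_matI)
  subgoal for i j
    apply (subgoal_tac "i < 4 \<and> j < 4")
     apply (subst index_mat, simp, simp)
     apply (subst mrl_index, simp, simp)
     apply (insert four[of i] four[of j])
     apply (auto simp: idx_def power2_eq_square distrib_left distrib_right mult.assoc momfacts monofacts)
    done
  by simp_all

lemma ofr: "complex_of_real x = complex_of_real y \<Longrightarrow> x = y" by simp

lemma no_meas: "\<not> (\<exists>\<nu> :: (real \<times> real) measure. sets \<nu> = sets borel \<and>
              (\<forall>m n::nat. integrable \<nu> (\<lambda>p. (fst p) ^ m * (snd p) ^ n) \<and>
                 \<phi> ((a1 + a2) ^ m * (b1 + b2) ^ n)
                   = complex_of_real (\<integral>p. (fst p) ^ m * (snd p) ^ n \<partial>\<nu>)))"
proof
  assume "\<exists>\<nu> :: (real \<times> real) measure. sets \<nu> = sets borel \<and>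
              (\<forall>m n::nat. integrable \<nu> (\<lambda>p. (fst p) ^ m * (snd p) ^ n) \<and>
                 \<phi> ((a1 + a2) ^ m * (b1 + b2) ^ n)
                   = complex_of_real (\<integral>p. (fst p) ^ m * (snd p) ^ n \<partial>\<nu>))"
  then obtain \<nu> :: "(real \<times> real) measure" where H: "\<forall>m n::nat. integrable \<nu> (\<lambda>p. (fst p) ^ m * (snd p) ^ n) \<and>
                 \<phi> ((a1 + a2) ^ m * (b1 + b2) ^ n)
                   = complex_of_real (\<integral>p. (fst p) ^ m * (snd p) ^ n \<partial>\<nu>)" by blast
  have iv: "complex_of_real (\<integral>p. (fst p) ^ m * (snd p) ^ n \<partial>\<nu>) = \<phi> ((a1 + a2) ^ m * (b1 + b2) ^ n)" for m n
    using H by simp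
  show False
  proof (rule no_meas_gen[of \<nu>])
    show "integrable \<nu> (\<lambda>p. fst p ^ m * snd p ^ n)" for m n using H by blast
    show "(\<integral>p. fst p ^ 0 * snd p ^ 0 \<partial>\<nu>) = 1"
      by (rule ofr) (subst iv, simp only: M00, simp)
    show "(\<integral>p. fst p ^ 1 * snd p ^ 0 \<partial>\<nu>) = 1"
      by (rule ofr) (subst iv, simp only: M10, simp)
    show "(\<integral>p. fst p ^ 0 * snd p ^ 1 \<partial>\<nu>) = 1"
      by (rule ofr) (subst iv, simp only: M01, simp)
    show "(\<integral>p. fst p ^ 2 * snd p ^ 0 \<partial>\<nu>) = 3/2"
      by (rule ofr) (subst iv, simp only: M20, simp)
    show "(\<integral>p. fst p ^ 0 * snd p ^ 2 \<partial>\<nu>) = 3/2"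
      by (rule ofr) (subst iv, simp only: M02, simp)
    show "(\<integral>p. fst p ^ 1 * snd p ^ 1 \<partial>\<nu>) = 1/2"
      by (rule ofr) (subst iv, simp only: M11, simp)
    show "(\<integral>p. fst p ^ 2 * snd p ^ 1 \<partial>\<nu>) = 5/8"
      by (rule ofr) (subst iv, simp only: M21, simp)
    show "(\<integral>p. fst p ^ 1 * snd p ^ 2 \<partial>\<nu>) = 5/8"
      by (rule ofr) (subst iv, simp only: M12, simp)
    show "(\<integral>p. fst p ^ 2 * snd p ^ 2 \<partial>\<nu>) = 3/4"
      by (rule ofr) (subst iv, simp only: M22, simp)
  qed
qed

end

theorem mainTheorem14:
  fixes \<phi> :: "'a::cplx_algebra_1 \<Rightarrow> complex"
    and a1 b1 a2 b2 :: 'a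
  assumes "nc_space \<phi>"
    and "bimonotone_indep \<phi> (pair_algs a1 b1 a2 b2)"
    and "\<forall>m n::nat. \<phi> (a1 ^ m * b1 ^ n) = complex_of_real (\<integral>p. (fst p) ^ m * (snd p) ^ n \<partial>mu)"
    and "\<forall>m n::nat. \<phi> (a2 ^ m * b2 ^ n) = complex_of_real (\<integral>p. (fst p) ^ m * (snd p) ^ n \<partial>mu)"
  defines "X1 \<equiv> mat 4 4 (\<lambda>(r, s). \<phi> ((a1 + a2) ^ (fst (idx ! r) + fst (idx ! s))
                                   * (b1 + b2) ^ (snd (idx ! r) + snd (idx ! s))))"
  shows "X1 = mat_of_rows_list 4
              [[1, 1, 1, 1/2],
               [1, 3/2, 1/2, 5/8],
               [1, 1/2, 3/2, 5/8],
               [1/2, 5/8, 5/8, 3/4]]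
       \<and> det X1 = - 1/32
       \<and> \<not> (\<exists>\<nu> :: (real \<times> real) measure. sets \<nu> = sets borel \<and>
              (\<forall>m n::nat. integrable \<nu> (\<lambda>p. (fst p) ^ m * (snd p) ^ n) \<and>
                 \<phi> ((a1 + a2) ^ m * (b1 + b2) ^ n)
                   = complex_of_real (\<integral>p. (fst p) ^ m * (snd p) ^ n \<partial>\<nu>)))"
proof -
  from assms(2) obtain \<Phi> \<Psi> where
    wfP: "word_functional (pair_algs a1 b1 a2 b2) \<Phi>" and
    Pk: "\<forall>k\<in>{1,2}. \<forall>w. adm (pair_algs a1 b1 a2 b2) w \<and> (\<forall>l\<in>set w. fst (ltag l) = k) \<longrightarrow> \<Phi> w = \<phi> (wprod w)" and
    Q1: "\<forall>w. adm (pair_algs a1 b1 a2 b2) w \<and> (\<forall>l\<in>set w. fst (ltag l) = 1) \<longrightarrow> \<Psi> w = prod_list (map lcoef w)" and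
    Q2: "\<forall>w. adm (pair_algs a1 b1 a2 b2) w \<and> (\<forall>l\<in>set w. fst (ltag l) = 2) \<longrightarrow> \<Psi> w = \<phi> (wprod w)" and
    cb: "cbifree_property (pair_algs a1 b1 a2 b2) \<Phi> \<Psi>" and
    link: "\<forall>w. adm (pair_algs a1 b1 a2 b2) w \<and> w \<noteq> [] \<and> (\<forall>l\<in>set w. lcoef l = 0) \<longrightarrow> \<phi> (wprod w) = \<Phi> w"
    unfolding bimonotone_indep_def by blast
  have "bm \<phi> a1 b1 a2 b2 \<Phi> \<Psi>"
    unfolding bm_def using assms(1,3,4) wfP Pk Q1 Q2 cb link by blast
  then interpret bm \<phi> a1 b1 a2 b2 \<Phi> \<Psi> .
  have X: "X1 = mat_of_rows_list 4
              [[1, 1, 1, 1/2],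
               [1, 3/2, 1/2, 5/8],
               [1, 1/2, 3/2, 5/8],
               [1/2, 5/8, 5/8, 3/4]]" unfolding X1_def by (rule Xeq)
  show ?thesis using X det4 no_meas by simp
qed

end
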